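(* Let $d\geq1$, $L\ge 1$ to be chosen, and fix a width $p\geq d+3$. For each $j\in\{1,\ldots,d\}$ and $k\in\{1,\ldots,p\}$ let $\{B_{jkr}:r\geq1\}$ be a set of basis functions. Let $\sigma:\mathbb{R}\to\mathbb{R}$ be a non-affine Lipschitz continuous function which is continuously differentiable at at least one point, with nonzero derivative at that point. For $L\geq1$, integers $q_{jk}\geq1$, real numbers $c_{jkr}$, vectors $W_k^{(l)}\in\mathbb{R}^p$ ($2\le l\le L$, $1\le k\le p$), output weights $w_k\in\mathbb{R}$ and biases $b_k^{(l)},b\in\mathbb{R}$, define the HDANN1 function on $[0,1]^d$ by $$x_k^{(1)}=\sigma\Big(\sum_{j=1}^d\sum_{r=1}^{q_{jk}}c_{jkr}B_{jkr}(x_j)+b_k^{(1)}\Big),\quad k=1,\ldots,p,$$ $$x_k^{(l)}=\sigma\big({W_k^{(l)}}^{\top}\mathbf{x}^{(l-1)}+b_k^{(l)}\big),\quad k=1,\ldots,p,\ l=2,\ldots,L,$$ where $\mathbf{x}^{(l)}=(x_1^{(l)},\ldots,x_p^{(l)})^\top$, and output $\mathrm{HDANN1}(\mathbf{x})=\sum_{k=1}^p w_kx_k^{(L)}+b$. Then for any continuous $f:[0,1]^d\to\mathbb{R}$ and any $\epsilon>0$ there exist $L\geq1$, $q_{jk}\geq1$, $W_k^{(l)}\in\mathbb{R}^p$, $w_k\in\mathbb{R}$ and $c_{jkr},b_k^{(l)},b\in\mathbb{R}$ such that $$\sup_{\mathbf{x}\in[0,1]^d}|f(\mathbf{x})-\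mathrm{HDANN1}(\mathbf{x})|<\epsilon.$$
   Context: A set $\{B_r:[0,1]\to\mathbb{R}\,|\,r\geq1\}$ of functions is called a set of basis functions if for every continuous $\phi:[0,1]\to\mathbb{R}$ and every $\epsilon>0$ there exist $q\geq1$ and $c_1,\ldots,c_q,c\in\mathbb{R}$ with $\sup_{x\in[0,1]}|\phi(x)-(\sum_{r=1}^q c_rB_r(x)+c)|<\epsilon$. *)

theory Defs
  imports "HOL-Analysis.Analysis"
begin

text \<open>A set of basis functions on [0,1]: the sup-norm approximation property.
  "sup < eps" is written as: some bound delta < eps holds at every point.\<close>
definition basis_functions :: "(nat \<Rightarrow> real \<Rightarrow> real) \<Rightarrow> bool" where
  "basis_functions B \<longleftrightarrow>
     (\<forall>\<phi>. continuous_on {0..1} \<phi> \<longrightarrow>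
        (\<forall>\<epsilon>>0. \<exists>q\<ge>1. \<exists>cs :: nat \<Rightarrow> real. \<exists>c :: real. \<exists>\<delta><\<epsilon>.
           \<forall>x\<in>{0..1}. \<bar>\<phi> x - ((\<Sum>r=1..q. cs r * B r x) + c)\<bar> \<le> \<delta>))"

definition C1_at_point_nonzero_deriv :: "(real \<Rightarrow> real) \<Rightarrow> bool" where
  "C1_at_point_nonzero_deriv \<sigma> \<longleftrightarrow>
     (\<exists>x0 U. open U \<and> x0 \<in> U \<and> (\<forall>x\<in>U. \<sigma> differentiable (at x))
        \<and> isCont (deriv \<sigma>) x0 \<and> deriv \<sigma> x0 \<noteq> 0)"

definition affine_fun :: "(real \<Rightarrow> real) \<Rightarrow> bool" where
  "affine_fun \<sigma> \<longleftrightarrow> (\<exists>a b. \<forall>x. \<sigma> x = a * x + b)"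

definition lipschitz_fun :: "(real \<Rightarrow> real) \<Rightarrow> bool" where
  "lipschitz_fun \<sigma> \<longleftrightarrow> (\<exists>C. \<forall>x y. \<bar>\<sigma> x - \<sigma> y\<bar> \<le> C * \<bar>x - y\<bar>)"

definition unit_cube :: "(real^'d) set" where
  "unit_cube = {x. \<forall>j. 0 \<le> x$j \<and> x$j \<le> 1}"

text \<open>Hidden units x_k^(l) of HDANN1, l = 1..L, k = 1..p.
  B j k r: basis functions; q j k: number of basis terms; c j k r: coefficients;
  W l k i: i-th entry of W_k^(l); bb l k: bias b_k^(l).  Level 0 is unused.\<close>
fun hdann1_hidden ::
  "(real \<Rightarrow> real) \<Rightarrow> ('d \<Rightarrow> nat \<Rightarrow> nat \<Rightarrow> real \<Rightarrow> real) \<Rightarrow> nat \<Rightarrow>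
   ('d \<Rightarrow> nat \<Rightarrow> nat) \<Rightarrow> ('d \<Rightarrow> nat \<Rightarrow> nat \<Rightarrow> real) \<Rightarrow>
   (nat \<Rightarrow> nat \<Rightarrow> nat \<Rightarrow> real) \<Rightarrow> (nat \<Rightarrow> nat \<Rightarrow> real) \<Rightarrow>
   real^'d::finite \<Rightarrow> nat \<Rightarrow> nat \<Rightarrow> real" where
  "hdann1_hidden \<sigma> B p q c W bb x 0 k = 0"
| "hdann1_hidden \<sigma> B p q c W bb x (Suc 0) k =
     \<sigma> ((\<Sum>j\<in>UNIV. \<Sum>r=1..q j k. c j k r * B j k r (x$j)) + bb 1 k)"
| "hdann1_hidden \<sigma> B p q c W bb x (Suc (Suc l)) k =
     \<sigma> ((\<Sum>i=1..p. W (Suc (Suc l)) k i * hdann1_hidden \<sigma> B p q c W bb x (Suc l) i)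
        + bb (Suc (Suc l)) k)"

definition HDANN1 ::
  "(real \<Rightarrow> real) \<Rightarrow> ('d \<Rightarrow> nat \<Rightarrow> nat \<Rightarrow> real \<Rightarrow> real) \<Rightarrow> nat \<Rightarrow> nat \<Rightarrow>
   ('d \<Rightarrow> nat \<Rightarrow> nat) \<Rightarrow> ('d \<Rightarrow> nat \<Rightarrow> nat \<Rightarrow> real) \<Rightarrow>
   (nat \<Rightarrow> nat \<Rightarrow> nat \<Rightarrow> real) \<Rightarrow> (nat \<Rightarrow> nat \<Rightarrow> real) \<Rightarrow> (nat \<Rightarrow> real) \<Rightarrow> real \<Rightarrow>
   real^'d::finite \<Rightarrow> real" where
  "HDANN1 \<sigma> B p L q c W bb w b x =
     (\<Sum>k=1..p. w k * hdann1_hidden \<sigma> B p q c W bb x L k) + b"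

end

theory Submission
  imports Defs
begin

definition shallow :: "(real \<Rightarrow> real) \<Rightarrow> (real \<times> real \<times> real) list \<Rightarrow> real \<Rightarrow> real" where
  "shallow \<sigma> xs t = (\<Sum>(c,a,b)\<leftarrow>xs. c * \<sigma> (a * t + b))"

definition VS :: "(real \<Rightarrow> real) \<Rightarrow> (real \<Rightarrow> real) \<Rightarrow> bool" where
  "VS \<sigma> g \<longleftrightarrow> (\<forall>R \<epsilon>. \<epsilon> > 0 \<longrightarrow> (\<exists>xs. \<forall>t. \<bar>t\<bar> \<le> R \<longrightarrow> \<bar>g t - shallow \<sigma> xs t\<bar> \<le> \<epsilon>))"

lemma shallow_Nil[simp]: "shallow \<sigma> [] t = 0"
  by (simp add: shallow_def)

lemma shallow_Cons[simp]: "shallow \<sigma> ((c,a,b)#xs) t = c * \<sigma> (a*t+b) + shallow \<sigma> xs t"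
  by (simp add: shallow_def)

lemma shallow_append: "shallow \<sigma> (xs @ ys) t = shallow \<sigma> xs t + shallow \<sigma> ys t"
  by (simp add: shallow_def)

lemma shallow_scale: "shallow \<sigma> (map (\<lambda>(c,a,b). (k*c,a,b)) xs) t = k * shallow \<sigma> xs t"
  by (induction xs) (auto simp: algebra_simps)

lemma shallow_affine: "shallow \<sigma> (map (\<lambda>(c,a',b'). (c, a'*a, a'*b+b')) xs) t = shallow \<sigma> xs (a*t+b)"
  by (induction xs) (auto simp: algebra_simps)

lemma VS_shallow: "VS \<sigma> (shallow \<sigma> xs)"
  unfolding VS_def by (metis abs_zero diff_self less_imp_le)

lemma VS_add:
  assumes "VS \<sigma> f" "VS \<sigma> g" shows "VS \<sigma> (\<lambda>t. f t + g t)"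
  unfolding VS_def
proof (intro allI impI)
  fix R \<epsilon> :: real assume e: "\<epsilon> > 0"
  obtain xs where xs: "\<forall>t. \<bar>t\<bar> \<le> R \<longrightarrow> \<bar>f t - shallow \<sigma> xs t\<bar> \<le> \<epsilon>/2"
    using assms(1) e unfolding VS_def by (meson half_gt_zero)
  obtain ys where ys: "\<forall>t. \<bar>t\<bar> \<le> R \<longrightarrow> \<bar>g t - shallow \<sigma> ys t\<bar> \<le> \<epsilon>/2"
    using assms(2) e unfolding VS_def by (meson half_gt_zero)
  show "\<exists>zs. \<forall>t. \<bar>t\<bar> \<le> R \<longrightarrow> \<bar>f t + g t - shallow \<sigma> zs t\<bar> \<le> \<epsilon>"
  proof (intro exI allI impI)
    fix t :: real assume "\<bar>t\<bar> \<le> R"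
    then show "\<bar>f t + g t - shallow \<sigma> (xs@ys) t\<bar> \<le> \<epsilon>"
    proof -
      have "\<bar>f t - shallow \<sigma> xs t\<bar> \<le> \<epsilon>/2" "\<bar>g t - shallow \<sigma> ys t\<bar> \<le> \<epsilon>/2"
        using xs ys \<open>\<bar>t\<bar> \<le> R\<close> by auto
      then show ?thesis unfolding shallow_append by linarith
    qed
  qed
qed

lemma VS_scale:
  assumes "VS \<sigma> f" shows "VS \<sigma> (\<lambda>t. k * f t)"
  unfolding VS_def
proof (intro allI impI)
  fix R \<epsilon> :: real assume e: "\<epsilon> > 0"
  obtain xs where xs: "\<forall>t. \<bar>t\<bar> \<le> R \<longrightarrow> \<bar>f t - shallow \<sigma> xs t\<bar> \<le> \<epsilon>/(\<bar>k\<bar>+1)"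
  proof -
    have "\<epsilon>/(\<bar>k\<bar>+1) > 0" using e by (simp add: add_pos_nonneg)
    then show ?thesis using assms that unfolding VS_def by blast
  qed
  show "\<exists>zs. \<forall>t. \<bar>t\<bar> \<le> R \<longrightarrow> \<bar>k * f t - shallow \<sigma> zs t\<bar> \<le> \<epsilon>"
  proof (intro exI allI impI)
    fix t :: real assume "\<bar>t\<bar> \<le> R"
    then have h: "\<bar>f t - shallow \<sigma> xs t\<bar> \<le> \<epsilon>/(\<bar>k\<bar>+1)" using xs by auto
    have "\<bar>k * f t - k * shallow \<sigma> xs t\<bar> = \<bar>k\<bar> * \<bar>f t - shallow \<sigma> xs t\<bar>"
      by (simp add: abs_mult[symmetric] algebra_simps)
    also have "\<dots> \<le> (\<bar>k\<bar>+1) * (\<epsilon>/(\<bar>k\<bar>+1))"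
      using h by (intro mult_mono) auto
    also have "\<dots> = \<epsilon>" by simp
    finally show "\<bar>k * f t - shallow \<sigma> (map (\<lambda>(c,a,b). (k*c,a,b)) xs) t\<bar> \<le> \<epsilon>"
      unfolding shallow_scale .
  qed
qed

lemma VS_affine:
  assumes "VS \<sigma> f" shows "VS \<sigma> (\<lambda>t. f (a*t+b))"
  unfolding VS_def
proof (intro allI impI)
  fix R \<epsilon> :: real assume e: "\<epsilon> > 0"
  obtain xs where xs: "\<forall>t. \<bar>t\<bar> \<le> \<bar>a\<bar>*\<bar>R\<bar>+\<bar>b\<bar> \<longrightarrow> \<bar>f t - shallow \<sigma> xs t\<bar> \<le> \<epsilon>"
    using assms e unfolding VS_def by blast
  show "\<exists>zs. \<forall>t. \<bar>t\<bar> \<le> R \<longrightarrow> \<bar>f (a*t+b) - shallow \<sigma> zs t\<bar> \<le> \<epsilon>"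
  proof (intro exI allI impI)
    fix t :: real assume t: "\<bar>t\<bar> \<le> R"
    have "\<bar>a*t+b\<bar> \<le> \<bar>a\<bar>*\<bar>R\<bar>+\<bar>b\<bar>"
    proof -
      have "\<bar>a*t\<bar> \<le> \<bar>a\<bar>*\<bar>R\<bar>" using t by (simp add: abs_mult mult_left_mono)
      then show ?thesis by linarith
    qed
    then show "\<bar>f (a*t+b) - shallow \<sigma> (map (\<lambda>(c,a',b'). (c, a'*a, a'*b+b')) xs) t\<bar> \<le> \<epsilon>"
      using xs by (simp add: shallow_affine)
  qed
qed

lemma VS_limit:
  assumes "\<And>R \<epsilon>. \<epsilon> > 0 \<Longrightarrow> \<exists>g. VS \<sigma> g \<and> (\<forall>t. \<bar>t\<bar> \<le> R \<longrightarrow> \<bar>f t - g t\<bar> \<le> \<epsilon>)"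
  shows "VS \<sigma> f"
  unfolding VS_def
proof (intro allI impI)
  fix R \<epsilon> :: real assume e: "\<epsilon> > 0"
  obtain g where g: "VS \<sigma> g" "\<forall>t. \<bar>t\<bar> \<le> R \<longrightarrow> \<bar>f t - g t\<bar> \<le> \<epsilon>/2"
    using assms[of "\<epsilon>/2"] e by auto
  obtain xs where xs: "\<forall>t. \<bar>t\<bar> \<le> R \<longrightarrow> \<bar>g t - shallow \<sigma> xs t\<bar> \<le> \<epsilon>/2"
    using g(1) e unfolding VS_def by (meson half_gt_zero)
  show "\<exists>zs. \<forall>t. \<bar>t\<bar> \<le> R \<longrightarrow> \<bar>f t - shallow \<sigma> zs t\<bar> \<le> \<epsilon>"
  proof (intro exI allI impI)
    fix t :: real assume "\<bar>t\<bar> \<le> R"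
    then have "\<bar>f t - g t\<bar> \<le> \<epsilon>/2" "\<bar>g t - shallow \<sigma> xs t\<bar> \<le> \<epsilon>/2" using g(2) xs by auto
    then show "\<bar>f t - shallow \<sigma> xs t\<bar> \<le> \<epsilon>" by linarith
  qed
qed

lemma VS_zero: "VS \<sigma> (\<lambda>t. 0)"
  using VS_shallow[of \<sigma> "[]"] by (simp add: shallow_def[abs_def])

lemma VS_sum:
  assumes "finite S" "\<And>i. i \<in> S \<Longrightarrow> VS \<sigma> (F i)"
  shows "VS \<sigma> (\<lambda>t. \<Sum>i\<in>S. F i t)"
  using assms
proof (induction S rule: finite_induct)
  case empty then show ?case by (simp add: VS_zero)
next
  case (insert x S) then show ?case by (simp add: VS_add)
qed

lemma VS_diff:
  assumes "VS \<sigma> f" "VS \<sigma> g" shows "VS \<sigma> (\<lambda>t. f t - g t)"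
  using VS_add[OF assms(1) VS_scale[OF assms(2), of "-1"]] by simp

lemma VS_sigma: "VS \<sigma> \<sigma>"
  using VS_shallow[of \<sigma> "[(1,1,0)]"] by (simp add: shallow_def[abs_def])


definition Av :: "real \<Rightarrow> (real \<Rightarrow> real) \<Rightarrow> real \<Rightarrow> real" where
  "Av e g t = integral {t..t+e} g"

definition Dl :: "real \<Rightarrow> (real \<Rightarrow> real) \<Rightarrow> real \<Rightarrow> real" where
  "Dl e g t = g (t+e) - g t"

lemma G_deriv:
  assumes "continuous_on UNIV g" "a < x"
  shows "((\<lambda>u. integral {a..u} g) has_real_derivative g x) (at x)"
proof -
  have "((\<lambda>u. integral {a..u} g) has_real_derivative g x) (at x within {a..x+1})"
    using assms by (intro integral_has_real_derivative) (auto intro: continuous_on_subset)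
  moreover have "at x within {a..x+1} = at x"
    using assms by (intro at_within_Icc_at) auto
  ultimately show ?thesis by simp
qed

lemma Av_deriv:
  assumes g: "continuous_on UNIV g" and e: "e \<ge> 0"
  shows "(Av e g has_real_derivative (g (t+e) - g t)) (at t)"
proof -
  define a where "a = t - 1"
  define G where "G u = integral {a..u} g" for u
  have d1: "(G has_real_derivative g t) (at t)"
    unfolding G_def using g by (intro G_deriv) (auto simp: a_def)
  have d2: "((\<lambda>u. G (u+e)) has_real_derivative g (t+e)) (at t)"
  proof -
    have "(G has_real_derivative g (t+e)) (at (t+e))"
      unfolding G_def using g e by (intro G_deriv) (auto simp: a_def)
    then show ?thesis using DERIV_shift[of G "g (t+e)" t e] by simp
  qed
  have d: "((\<lambda>u. G (u+e) - G u) has_real_derivative (g (t+e) - g t)) (at t)"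
    by (intro DERIV_diff d1 d2)
  show ?thesis
  proof (rule has_field_derivative_transform_within_open[OF d, of "{a<..}"])
    show "open {a<..}" by simp
    show "t \<in> {a<..}" by (simp add: a_def)
    fix u assume u: "u \<in> {a<..}"
    have "integral {a..u} g + integral {u..u+e} g = integral {a..u+e} g"
      using u e by (intro Henstock_Kurzweil_Integration.integral_combine integrable_continuous_real continuous_on_subset[OF g]) auto
    then show "G (u+e) - G u = Av e g u" unfolding G_def Av_def by simp
  qed
qed

lemma Av_cont: "continuous_on UNIV g \<Longrightarrow> e \<ge> 0 \<Longrightarrow> continuous_on UNIV (Av e g)"
  using Av_deriv by (meson DERIV_isCont continuous_at_imp_continuous_on)

lemma Dl_cont: "continuous_on UNIV g \<Longrightarrow> continuous_on UNIV (Dl e g)"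
  unfolding Dl_def[abs_def]
  by (intro continuous_intros; rule continuous_on_compose2[of UNIV g]; auto intro!: continuous_intros)

lemma riemann_bound:
  fixes m :: nat and t h \<eta> :: real and g :: "real \<Rightarrow> real"
  assumes g: "continuous_on UNIV g" and h: "h \<ge> 0"
    and bd: "\<And>i::nat. \<And>s. i < m \<Longrightarrow> s \<in> {t+i*h..t+i*h+h} \<Longrightarrow> \<bar>g s - g (t+i*h)\<bar> \<le> \<eta>"
  shows "\<bar>integral {t..t+m*h} g - (\<Sum>i<m. h * g (t+i*h))\<bar> \<le> m*h*\<eta>"
  using bd
proof (induction m)
  case 0 then show ?case by simp
next
  case (Suc m)
  have IH: "\<bar>integral {t..t+m*h} g - (\<Sum>i<m. h * g (t+i*h))\<bar> \<le> m*h*\<eta>"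
    using Suc by auto
  have comb: "integral {t..t+m*h} g + integral {t+m*h..t+m*h+h} g = integral {t..t+m*h+h} g"
    using h by (intro Henstock_Kurzweil_Integration.integral_combine integrable_continuous_real continuous_on_subset[OF g]) auto
  have piece: "\<bar>integral {t+m*h..t+m*h+h} g - h * g (t+m*h)\<bar> \<le> \<eta> * h"
  proof -
    have i1: "g integrable_on {t+m*h..t+m*h+h}"
      by (intro integrable_continuous_real continuous_on_subset[OF g]) auto
    have "integral {t+m*h..t+m*h+h} (\<lambda>s. g s - g (t+m*h)) = integral {t+m*h..t+m*h+h} g - h * g (t+m*h)"
      using h by (subst integral_diff[OF i1]) auto
    moreover have "norm (integral {t+m*h..t+m*h+h} (\<lambda>s. g s - g (t+m*h))) \<le> \<eta> * ((t+m*h+h) - (t+m*h))"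
      using h Suc.prems[of m]
      by (intro integral_bound) (auto intro!: continuous_intros continuous_on_subset[OF g])
    ultimately show ?thesis by simp
  qed
  have eq: "t + real (Suc m) * h = t+m*h+h" by (simp add: algebra_simps)
  show ?case
    unfolding eq using IH piece comb[symmetric] by (simp add: algebra_simps)
qed

lemma Av_VS:
  assumes g: "continuous_on UNIV g" and V: "VS \<sigma> g" and e: "e > 0"
  shows "VS \<sigma> (Av e g)"
proof (rule VS_limit)
  fix R \<epsilon> :: real assume \<epsilon>: "\<epsilon> > 0"
  define K where "K = {-\<bar>R\<bar>-1 .. \<bar>R\<bar>+e+1}"
  have "uniformly_continuous_on K g"
    unfolding K_def by (intro compact_uniformly_continuous continuous_on_subset[OF g]) auto
  then obtain d where d: "d > 0" "\<And>x x'. x \<in> K \<Longrightarrow> x' \<in> K \<Longrightarrow> dist x' x < d \<Longrightarrow> dist (g x') (g x) < \<epsilon>/e"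
    unfolding uniformly_continuous_on_def using \<epsilon> e by (metis divide_pos_pos)
  obtain m :: nat where m: "e / d < m" using reals_Archimedean2 by blast
  have mpos: "m > 0" using m e d by (metis divide_pos_pos gr0I of_nat_0 order.asym)
  define h where "h = e / m"
  have hpos: "h > 0" using e mpos by (simp add: h_def)
  have hd: "h < d" using m d e mpos by (simp add: h_def field_simps)
  have mh: "m * h = e" using mpos by (simp add: h_def)
  show "\<exists>g'. VS \<sigma> g' \<and> (\<forall>t. \<bar>t\<bar> \<le> R \<longrightarrow> \<bar>Av e g t - g' t\<bar> \<le> \<epsilon>)"
  proof (intro exI conjI allI impI)
    show "VS \<sigma> (\<lambda>t. \<Sum>i<m. h * g (t+i*h))"
      by (intro VS_sum VS_scale) (use VS_affine[OF V, of 1] in auto)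
    fix t assume t: "\<bar>t\<bar> \<le> R"
    have "\<bar>integral {t..t+m*h} g - (\<Sum>i<m. h * g (t+i*h))\<bar> \<le> m*h*(\<epsilon>/e)"
    proof (rule riemann_bound[OF g less_imp_le[OF hpos]])
      fix i s assume i: "i < m" and s: "s \<in> {t+i*h..t+i*h+h}"
      have ih: "i*h + h \<le> e" using i mh hpos
        by (metis add.commute mult.commute mult_le_cancel_left_pos of_nat_Suc of_nat_le_iff Suc_leI distrib_left mult.right_neutral)
      have ih0: "0 \<le> real i*h" using hpos by simp
      have tt: "-R \<le> t" "t \<le> R" "R \<le> \<bar>R\<bar>" "-\<bar>R\<bar> \<le> R" using t by auto
      have ss: "t+i*h \<le> s" "s \<le> t+i*h+h" using s by auto
      have inK: "s \<in> K" "t+i*h \<in> K" unfolding K_def atLeastAtMost_iff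
        using tt ss ih ih0 hpos by linarith+
      have "dist s (t+i*h) < d" using s hd by (auto simp: dist_real_def)
      then show "\<bar>g s - g (t+i*h)\<bar> \<le> \<epsilon>/e" using d(2)[OF inK(2) inK(1)] by (simp add: dist_real_def)
    qed
    then show "\<bar>Av e g t - (\<Sum>i<m. h * g (t+i*h))\<bar> \<le> \<epsilon>"
      using mh e by (simp add: Av_def)
  qed
qed


lemma VS_step:
  fixes D D' :: "real \<Rightarrow> real"
  assumes D: "\<And>u. (D has_real_derivative D' u) (at u)" and D'c: "continuous_on UNIV D'"
    and V: "\<And>a b. VS \<sigma> (\<lambda>t. t^j * D (a*t+b))"
  shows "VS \<sigma> (\<lambda>t. t^(Suc j) * D' (a*t+b))"
proof (rule VS_limit)
  fix R \<epsilon> :: real assume \<epsilon>: "\<epsilon> > 0"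
  define R1 where "R1 = \<bar>R\<bar> + 1"
  have R1: "R1 \<ge> 1" by (simp add: R1_def)
  define \<eta> where "\<eta> = \<epsilon> / R1^(Suc j)"
  have \<eta>: "\<eta> > 0" using \<epsilon> R1 by (simp add: \<eta>_def)
  define M where "M = \<bar>a\<bar>*R1 + \<bar>b\<bar> + 1"
  define K where "K = {-M..M}"
  have "uniformly_continuous_on K D'"
    unfolding K_def by (intro compact_uniformly_continuous continuous_on_subset[OF D'c]) auto
  then obtain d where d: "d > 0" "\<And>x x'. x \<in> K \<Longrightarrow> x' \<in> K \<Longrightarrow> dist x' x < d \<Longrightarrow> dist (D' x') (D' x) < \<eta>"
    unfolding uniformly_continuous_on_def using \<eta> by metis
  define h where "h = min (d/(2*R1)) (1/(2*R1))"
  have h: "h > 0" using d R1 by (simp add: h_def)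
  have hR1: "h * R1 < d" "h * R1 \<le> 1/2" using d R1 by (auto simp: h_def min_def field_simps)
  show "\<exists>g. VS \<sigma> g \<and> (\<forall>t. \<bar>t\<bar> \<le> R \<longrightarrow> \<bar>t^(Suc j) * D' (a*t+b) - g t\<bar> \<le> \<epsilon>)"
  proof (intro exI conjI allI impI)
    show "VS \<sigma> (\<lambda>t. (1/h) * (t^j * D ((a+h)*t+b) - t^j * D (a*t+b)))"
      by (intro VS_scale VS_diff V)
    fix t :: real assume t: "\<bar>t\<bar> \<le> R"
    have tR1: "\<bar>t\<bar> \<le> R1" using t by (simp add: R1_def)
    define u where "u = a*t+b"
    define u' where "u' = (a+h)*t+b"
    have uu: "u' - u = h*t" by (simp add: u_def u'_def algebra_simps)
    have ht: "\<bar>h*t\<bar> \<le> h*R1" using tR1 h by (simp add: abs_mult mult_left_mono)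
    have atb: "\<bar>a*t+b\<bar> \<le> \<bar>a\<bar>*R1 + \<bar>b\<bar>"
    proof -
      have "\<bar>a*t\<bar> \<le> \<bar>a\<bar>*R1" using tR1 by (simp add: abs_mult mult_left_mono)
      then show ?thesis by linarith
    qed
    define S where "S = {min u u' .. max u u'}"
    have Sprop: "z \<in> S \<Longrightarrow> z \<in> K \<and> \<bar>z - u\<bar> < d" for z
    proof -
      assume z: "z \<in> S"
      have "\<bar>z - u\<bar> \<le> \<bar>u' - u\<bar>" using z by (auto simp: S_def min_def max_def split: if_splits)
      then have zu: "\<bar>z - u\<bar> \<le> h*R1" using uu ht by simp
      then show ?thesis using hR1 atb unfolding K_def M_def u_def by (auto simp: abs_le_iff)
    qed
    have uK: "u \<in> K" using atb unfolding K_def M_def u_def by (auto simp: abs_le_iff)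
    have bound: "norm ((D u' - u' * D' u) - (D u - u * D' u)) \<le> \<eta> * norm (u' - u)"
    proof (rule field_differentiable_bound[of S])
      show "convex S" unfolding S_def by (rule convex_real_interval)
      show "u' \<in> S" "u \<in> S" unfolding S_def by auto
      fix z assume z: "z \<in> S"
      show "((\<lambda>s. D s - s * D' u) has_field_derivative (D' z - D' u)) (at z within S)"
        by (intro DERIV_diff has_field_derivative_at_within[OF D] derivative_eq_intros) auto
      have "dist (D' z) (D' u) < \<eta>" using d(2)[OF uK] Sprop[OF z] by (auto simp: dist_real_def)
      then show "norm (D' z - D' u) \<le> \<eta>" by (simp add: dist_real_def)
    qed
    have b2: "\<bar>D u' - D u - h*t * D' u\<bar> \<le> \<eta> * (h * \<bar>t\<bar>)"
      using bound uu h by (simp add: algebra_simps abs_mult)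
    have "\<bar>t^(Suc j) * D' u - (1/h) * (t^j * D u' - t^j * D u)\<bar>
          = \<bar>t\<bar>^j * \<bar>D u' - D u - h*t * D' u\<bar> / h"
    proof -
      have "t^(Suc j) * D' u - (1/h) * (t^j * D u' - t^j * D u) = - (t^j * (D u' - D u - h*t * D' u)) / h"
        using h by (simp add: field_simps)
      then show ?thesis using h by (simp add: abs_mult abs_divide power_abs)
    qed
    also have "\<dots> \<le> \<bar>t\<bar>^j * (\<eta> * (h * \<bar>t\<bar>)) / h"
      using b2 h by (intro divide_right_mono mult_left_mono) auto
    also have "\<dots> = \<eta> * \<bar>t\<bar>^(Suc j)" using h by (simp add: field_simps)
    also have "\<dots> \<le> \<eta> * R1^(Suc j)"
      using \<eta> tR1 by (intro mult_left_mono power_mono) auto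
    also have "\<dots> = \<epsilon>" using R1 by (simp add: \<eta>_def)
    finally show "\<bar>t^(Suc j) * D' (a*t+b) - (1/h) * (t^j * D ((a+h)*t+b) - t^j * D (a*t+b))\<bar> \<le> \<epsilon>"
      by (simp add: u_def u'_def)
  qed
qed

lemma VS_monomial_chain:
  fixes \<psi> :: "nat \<Rightarrow> real \<Rightarrow> real"
  assumes der: "\<And>j u. j < k \<Longrightarrow> (\<psi> j has_real_derivative \<psi> (Suc j) u) (at u)"
    and cont: "\<And>j. j \<le> k \<Longrightarrow> continuous_on UNIV (\<psi> j)"
    and V0: "VS \<sigma> (\<psi> 0)" and nz: "\<psi> k b \<noteq> 0"
  shows "VS \<sigma> (\<lambda>t. t^k)"
proof -
  have "j \<le> k \<Longrightarrow> VS \<sigma> (\<lambda>t. t^j * \<psi> j (a*t+b))" for j a b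
  proof (induction j arbitrary: a b)
    case 0 then show ?case using VS_affine[OF V0] by simp
  next
    case (Suc j)
    show ?case
      by (rule VS_step[of "\<psi> j"]) (use Suc der cont in auto)
  qed
  from this[of k 0 b] have "VS \<sigma> (\<lambda>t. t^k * \<psi> k b)" by simp
  from VS_scale[OF this, of "1 / \<psi> k b"] show ?thesis using nz by simp
qed


lemma Avn_cont: "continuous_on UNIV g \<Longrightarrow> e \<ge> 0 \<Longrightarrow> continuous_on UNIV ((Av e ^^ m) g)"
  by (induction m) (auto intro: Av_cont)

lemma Avn_VS: "continuous_on UNIV g \<Longrightarrow> VS \<sigma> g \<Longrightarrow> e > 0 \<Longrightarrow> VS \<sigma> ((Av e ^^ m) g)"
  by (induction m) (auto intro!: Av_VS Avn_cont)

lemma Dln_cont: "continuous_on UNIV g \<Longrightarrow> continuous_on UNIV ((Dl e ^^ m) g)"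
  by (induction m) (auto intro: Dl_cont)

lemma Dl_deriv:
  assumes "\<And>u. (G has_real_derivative G' u) (at u)"
  shows "(Dl e G has_real_derivative Dl e G' u) (at u)"
proof -
  have "((\<lambda>t. G (t+e)) has_real_derivative G' (u+e)) (at u)"
    using DERIV_shift[of G "G' (u+e)" u e] assms by simp
  then show ?thesis unfolding Dl_def[abs_def] by (intro DERIV_diff assms)
qed

lemma Dln_deriv:
  assumes "\<And>u. (F has_real_derivative F' u) (at u)"
  shows "((Dl e ^^ j) F has_real_derivative (Dl e ^^ j) F' u) (at u)"
proof (induction j arbitrary: u)
  case 0 then show ?case using assms by simp
next
  case (Suc j) then show ?case by (simp add: Dl_deriv)
qed

definition ds :: "(nat \<Rightarrow> real) \<Rightarrow> nat \<Rightarrow> real" where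
  "ds u n = u (Suc n) - u n"

lemma ds_bounded:
  assumes "\<And>n. \<bar>u n\<bar> \<le> M" "\<And>n. (ds ^^ m) u n = 0"
  shows "ds u n = 0"
  using assms
proof (induction m arbitrary: u M n)
  case 0 then show ?case by (simp add: ds_def)
next
  case (Suc m)
  have b: "\<bar>ds u n\<bar> \<le> 2*M" for n using Suc.prems(1)[of n] Suc.prems(1)[of "Suc n"] by (simp add: ds_def)
  have z: "(ds ^^ m) (ds u) n = 0" for n using Suc.prems(2)[of n] by (simp add: funpow_Suc_right del: funpow.simps)
  have dd: "ds (ds u) n = 0" for n using Suc.IH[OF b z] .
  have step: "ds u (Suc n) = ds u n" for n using dd[of n] unfolding ds_def by linarith
  have const: "ds u n = ds u 0" for n
    by (induction n) (use step in auto)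
  have st2: "u (Suc n) = u n + ds u 0" for n using const[of n] by (simp add: ds_def)
  have lin: "u n = u 0 + n * ds u 0" for n
  proof (induction n)
    case (Suc n) then show ?case using st2[of n] by (simp add: algebra_simps)
  qed simp
  show ?case
  proof (rule ccontr)
    assume "ds u n \<noteq> 0"
    then have c: "ds u 0 \<noteq> 0" using const[of n] by simp
    obtain N :: nat where N: "(2*M + 1) / \<bar>ds u 0\<bar> < N" using reals_Archimedean2 by blast
    have "2*M + 1 < N * \<bar>ds u 0\<bar>" using N c by (simp add: field_simps)
    moreover have "\<bar>u N\<bar> \<le> M" "\<bar>u 0\<bar> \<le> M" using Suc.prems(1) by auto
    moreover have "\<bar>N * ds u 0\<bar> = N * \<bar>ds u 0\<bar>" by (simp add: abs_mult)
    ultimately show False using lin[of N] by linarith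
  qed
qed

lemma Dl_seq:
  fixes t e :: real and n :: nat
  shows "(Dl e ^^ m) g (t + n*e) = (ds ^^ m) (\<lambda>n. g (t + real n*e)) n"
proof (induction m arbitrary: g n)
  case 0 then show ?case by simp
next
  case (Suc m)
  have "(Dl e ^^ Suc m) g (t + n*e) = (Dl e ^^ m) (Dl e g) (t + n*e)"
    by (simp add: funpow_Suc_right del: funpow.simps)
  also have "\<dots> = (ds ^^ m) (\<lambda>n. Dl e g (t + real n*e)) n" by (rule Suc.IH)
  also have "(\<lambda>n. Dl e g (t + real n*e)) = ds (\<lambda>n. g (t + real n*e))"
    by (auto simp: Dl_def ds_def algebra_simps)
  also have "(ds ^^ m) (ds (\<lambda>n. g (t + real n*e))) n = (ds ^^ Suc m) (\<lambda>n. g (t + real n*e)) n"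
    by (simp add: funpow_Suc_right del: funpow.simps)
  finally show ?case .
qed

lemma AP_lemma:
  fixes h :: "real \<Rightarrow> real"
  fixes n :: nat
  assumes mid: "\<And>t e. e > 0 \<Longrightarrow> h (t+2*e) - 2*h (t+e) + h t = 0" and e: "e > 0"
  shows "h (t + real n*e) = h t + real n * (h (t+e) - h t)"
proof -
  have "h (t + real n*e) = h t + real n * (h (t+e) - h t) \<and> h (t + real (Suc n)*e) = h t + real (Suc n) * (h (t+e) - h t)"
  proof (induction n)
    case 0 then show ?case by simp
  next
    case (Suc n)
    have "h ((t + real n*e) + 2*e) - 2*h ((t+real n*e)+e) + h (t+real n*e) = 0" using mid e by blast
    moreover have "(t + real n*e) + 2*e = t + real (Suc (Suc n)) * e" "(t+real n*e)+e = t + real (Suc n) * e"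
      by (simp_all add: algebra_simps)
    ultimately show ?case using Suc by (simp add: algebra_simps)
  qed
  then show ?thesis by blast
qed

lemma midpoint_affine:
  fixes \<sigma> :: "real \<Rightarrow> real"
  assumes cont: "continuous_on UNIV \<sigma>" and mid: "\<And>t e. e > 0 \<Longrightarrow> \<sigma> (t+2*e) - 2*\<sigma> (t+e) + \<sigma> t = 0"
  shows "affine_fun \<sigma>"
proof -
  define h where "h x = \<sigma> x - \<sigma> 0 - x * (\<sigma> 1 - \<sigma> 0)" for x
  have hmid: "h (t+2*e) - 2*h (t+e) + h t = 0" if "e > 0" for t e
    using mid[OF that, of t] by (simp add: h_def algebra_simps)
  have h0: "h 0 = 0" and h1: "h 1 = 0" by (simp_all add: h_def)
  have zeroM: "h (- real M + n / q) = 0" if q: "q > 0" for M n q :: nat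
  proof -
    have qe: "1 / real q > 0" using q by simp
    note ap = AP_lemma[OF hmid qe, of "- real M"]
    define dd where "dd = h (- real M + 1/q) - h (- real M)"
    have a1: "- real M + real (M*q) * (1/q) = 0" using q by simp
    have a2: "- real M + real (M*q+q) * (1/q) = 1" using q by (simp add: field_simps)
    have "h (- real M) + real (M*q) * dd = 0" using ap[of "M*q"] a1 h0 by (simp add: dd_def)
    moreover have "h (- real M) + real (M*q+q) * dd = 0" using ap[of "M*q+q"] a2 h1 by (simp add: dd_def)
    ultimately have "real q * dd = 0" by (simp add: algebra_simps)
    then have "dd = 0" using q by simp
    moreover have "h (- real M) = 0" using \<open>h (- real M) + real (M*q) * dd = 0\<close> \<open>dd = 0\<close> by simp
    ultimately show ?thesis using ap[of n] by (simp add: dd_def field_simps)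
  qed
  have hQ: "h r = 0" if rQ: "r \<in> \<rat>" for r
  proof -
    obtain i :: int and q :: nat where iq: "r = real_of_int i / real q" "q \<noteq> 0"
      using rQ unfolding Rats_eq_int_div_nat by blast
    define M where "M = nat \<lceil>\<bar>r\<bar>\<rceil>"
    have M: "\<bar>r\<bar> \<le> real M" by (simp add: M_def)
    have qpos: "real q > 0" using iq by simp
    have "- real M \<le> r" using M by linarith
    then have "- real M * q \<le> r * q" using qpos mult_right_mono[of "- real M" r "real q"] by linarith
    then have nn: "0 \<le> real_of_int i + real M * real q" using iq qpos by (simp add: field_simps)
    define n where "n = nat (i + int M * int q)"
    have zz: "real_of_int (i + int M * int q) = real_of_int i + real M * real q" by simp
    have z0: "0 \<le> i + int M * int q" using nn zz by (metis of_int_0_le_iff)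
    have "real n = real_of_int i + real M * real q" unfolding n_def using z0 zz by (simp only: of_nat_nat)
    then have "- real M + real n / real q = r" using iq qpos by (simp add: field_simps)
    then show ?thesis using zeroM[of q M n] iq by simp
  qed
  have hcont: "continuous_on UNIV h" unfolding h_def[abs_def] by (intro continuous_intros cont)
  have "closed {x. h x = 0}"
    using continuous_closed_preimage_constant[OF hcont closed_UNIV, of 0] by (simp add: vimage_def Collect_conj_eq[symmetric])
  then have "closure \<rat> \<subseteq> {x. h x = 0}" using hQ by (intro closure_minimal) auto
  then have "h x = 0" for x using Rats_closure_real by auto
  then have "\<sigma> x = (\<sigma> 1 - \<sigma> 0) * x + \<sigma> 0" for x by (simp add: h_def algebra_simps)
  then show ?thesis unfolding affine_fun_def by blast
qed

lemma nonvanishing: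
  fixes \<sigma> :: "real \<Rightarrow> real"
  assumes cont: "continuous_on UNIV \<sigma>" and lip: "\<And>x y. \<bar>\<sigma> x - \<sigma> y\<bar> \<le> C * \<bar>x - y\<bar>"
    and na: "\<not> affine_fun \<sigma>"
  shows "\<exists>e>0. \<exists>b. (Dl e ^^ k) \<sigma> b \<noteq> 0"
proof (cases k)
  case 0
  have "\<exists>b. \<sigma> b \<noteq> 0"
  proof (rule ccontr)
    assume "\<not> ?thesis"
    then have "\<forall>x. \<sigma> x = 0 * x + 0" by simp
    then show False using na unfolding affine_fun_def by blast
  qed
  then show ?thesis using 0 by (auto intro: exI[of _ 1])
next
  case (Suc m)
  show ?thesis
  proof (rule ccontr)
    assume "\<not> ?thesis"
    then have z: "\<And>e b. e > 0 \<Longrightarrow> (Dl e ^^ Suc m) \<sigma> b = 0" using Suc by auto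
    have "\<sigma> (t+2*e) - 2*\<sigma> (t+e) + \<sigma> t = 0" if e: "e > 0" for t e
    proof -
      define u where "u n = Dl e \<sigma> (t + real n*e)" for n :: nat
      have ub: "\<bar>u n\<bar> \<le> C * e" for n using lip[of "t+n*e+e" "t+n*e"] e by (simp add: u_def Dl_def)
      have "(ds ^^ m) u n = 0" for n
      proof -
        have "(ds ^^ m) u n = (Dl e ^^ m) (Dl e \<sigma>) (t + real n*e)"
          unfolding u_def by (rule Dl_seq[symmetric])
        also have "\<dots> = (Dl e ^^ Suc m) \<sigma> (t + real n*e)" by (simp add: funpow_Suc_right del: funpow.simps)
        finally show ?thesis using z[OF e] by simp
      qed
      then have "ds u 0 = 0" using ds_bounded[where u=u and M="C*e" and m=m, OF ub] by blast
      then show ?thesis by (simp add: ds_def u_def Dl_def algebra_simps)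
    qed
    then show False using midpoint_affine[OF cont] na by blast
  qed
qed

lemma VS_monomial:
  fixes \<sigma> :: "real \<Rightarrow> real"
  assumes cont: "continuous_on UNIV \<sigma>" and lip: "\<And>x y. \<bar>\<sigma> x - \<sigma> y\<bar> \<le> C * \<bar>x - y\<bar>"
    and na: "\<not> affine_fun \<sigma>"
  shows "VS \<sigma> (\<lambda>t. t^k)"
proof -
  obtain e b where e: "e > 0" and nz: "(Dl e ^^ k) \<sigma> b \<noteq> 0" using nonvanishing[OF cont lip na] by blast
  define \<psi> where "\<psi> j = (Dl e ^^ j) ((Av e ^^ (k - j)) \<sigma>)" for j
  show ?thesis
  proof (rule VS_monomial_chain[of k \<psi>])
    fix j u assume j: "j < k"
    have eq: "(Av e ^^ (k - j)) \<sigma> = Av e ((Av e ^^ (k - Suc j)) \<sigma>)"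
      using j by (metis Suc_diff_Suc comp_apply funpow.simps(2))
    have "\<And>u. (Av e ((Av e ^^ (k - Suc j)) \<sigma>) has_real_derivative Dl e ((Av e ^^ (k - Suc j)) \<sigma>) u) (at u)"
      unfolding Dl_def using e by (intro Av_deriv Avn_cont cont) auto
    from Dln_deriv[OF this, where e=e and j=j and u=u]
    show "(\<psi> j has_real_derivative \<psi> (Suc j) u) (at u)"
      unfolding \<psi>_def eq by (simp add: funpow_Suc_right del: funpow.simps)
  next
    fix j assume "j \<le> k"
    show "continuous_on UNIV (\<psi> j)" unfolding \<psi>_def using e by (intro Dln_cont Avn_cont cont) auto
  next
    show "VS \<sigma> (\<psi> 0)" unfolding \<psi>_def using e by (simp add: Avn_VS cont VS_sigma)
  next
    show "\<psi> k b \<noteq> 0" using nz by (simp add: \<psi>_def)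
  qed
qed

lemma VS_continuous:
  fixes \<sigma> :: "real \<Rightarrow> real"
  assumes cont: "continuous_on UNIV \<sigma>" and lip: "\<And>x y. \<bar>\<sigma> x - \<sigma> y\<bar> \<le> C * \<bar>x - y\<bar>"
    and na: "\<not> affine_fun \<sigma>" and hc: "continuous_on UNIV g"
  shows "VS \<sigma> g"
proof (rule VS_limit)
  fix R \<epsilon> :: real assume \<epsilon>: "\<epsilon> > 0"
  obtain p where p: "real_polynomial_function p" "\<And>x. x \<in> {-\<bar>R\<bar>..\<bar>R\<bar>} \<Longrightarrow> \<bar>g x - p x\<bar> < \<epsilon>"
    using Stone_Weierstrass_real_polynomial_function[of "{-\<bar>R\<bar>..\<bar>R\<bar>}" g \<epsilon>] \<epsilon> hc
    by (metis compact_Icc continuous_on_subset subset_UNIV)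
  obtain a n where pa: "p = (\<lambda>x. \<Sum>i\<le>n. a i * x^i)" using p(1) real_polynomial_function_iff_sum by blast
  show "\<exists>g'. VS \<sigma> g' \<and> (\<forall>t. \<bar>t\<bar> \<le> R \<longrightarrow> \<bar>g t - g' t\<bar> \<le> \<epsilon>)"
  proof (intro exI conjI allI impI)
    show "VS \<sigma> p" unfolding pa by (intro VS_sum VS_scale VS_monomial[OF cont lip na]) auto
    fix t assume "\<bar>t\<bar> \<le> R"
    then show "\<bar>g t - p t\<bar> \<le> \<epsilon>" using p(2)[of t] by (auto simp: abs_le_iff)
  qed
qed


definition lin :: "('d::finite \<Rightarrow> real) \<Rightarrow> real^'d \<Rightarrow> real" where
  "lin \<beta> x = (\<Sum>j\<in>UNIV. \<beta> j * x$j)"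

definition ridge :: "(real \<Rightarrow> real) \<Rightarrow> (real \<times> ('d::finite \<Rightarrow> real) \<times> real) list \<Rightarrow> real^'d \<Rightarrow> real" where
  "ridge \<sigma> ys x = (\<Sum>(\<gamma>,\<beta>,\<theta>)\<leftarrow>ys. \<gamma> * \<sigma> (lin \<beta> x + \<theta>))"

definition RA :: "(real \<Rightarrow> real) \<Rightarrow> (real^'d::finite \<Rightarrow> real) \<Rightarrow> bool" where
  "RA \<sigma> g \<longleftrightarrow> (\<forall>\<epsilon>>0. \<exists>c0 ys. \<forall>x\<in>unit_cube. \<bar>g x - (c0 + ridge \<sigma> ys x)\<bar> \<le> \<epsilon>)"

inductive expsum :: "(real^'d::finite \<Rightarrow> real) \<Rightarrow> bool" where
  es_const: "expsum (\<lambda>x. c)"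
| es_exp: "expsum (\<lambda>x. c * exp (lin a x))"
| es_add: "expsum f \<Longrightarrow> expsum g \<Longrightarrow> expsum (\<lambda>x. f x + g x)"

lemma ridge_Nil[simp]: "ridge \<sigma> [] x = 0" by (simp add: ridge_def)

lemma ridge_append: "ridge \<sigma> (xs @ ys) x = ridge \<sigma> xs x + ridge \<sigma> ys x"
  by (simp add: ridge_def)

lemma lin_scale: "lin (\<lambda>j. a * \<alpha> j) x = a * lin \<alpha> x"
  by (simp add: lin_def sum_distrib_left algebra_simps)

lemma lin_add: "lin (\<lambda>j. \<alpha> j + \<beta> j) x = lin \<alpha> x + lin \<beta> x"
  by (simp add: lin_def sum.distrib algebra_simps)

lemma ridge_shallow:
  "ridge \<sigma> (map (\<lambda>(c,a,b). (c, (\<lambda>j. a * \<alpha> j), b)) xs) x = shallow \<sigma> xs (lin \<alpha> x)"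
  by (induction xs) (auto simp: ridge_def lin_scale)

lemma lin_bound:
  assumes "x \<in> unit_cube" shows "\<bar>lin \<alpha> x\<bar> \<le> (\<Sum>j\<in>UNIV. \<bar>\<alpha> j\<bar>)"
proof -
  have "\<bar>lin \<alpha> x\<bar> \<le> (\<Sum>j\<in>UNIV. \<bar>\<alpha> j * x$j\<bar>)" unfolding lin_def by (rule sum_abs)
  also have "\<dots> \<le> (\<Sum>j\<in>UNIV. \<bar>\<alpha> j\<bar>)"
  proof (intro sum_mono)
    fix j
    have "0 \<le> x$j" "x$j \<le> 1" using assms by (auto simp: unit_cube_def)
    then show "\<bar>\<alpha> j * x$j\<bar> \<le> \<bar>\<alpha> j\<bar>" by (simp add: abs_mult mult_left_le)
  qed
  finally show ?thesis .
qed

lemma RA_add: "RA \<sigma> f \<Longrightarrow> RA \<sigma> g \<Longrightarrow> RA \<sigma> (\<lambda>x. f x + g x)"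
  unfolding RA_def
proof (intro allI impI)
  fix \<epsilon> :: real assume e: "\<epsilon> > 0"
  assume f: "\<forall>\<epsilon>>0. \<exists>c0 ys. \<forall>x\<in>unit_cube. \<bar>f x - (c0 + ridge \<sigma> ys x)\<bar> \<le> \<epsilon>"
    and g: "\<forall>\<epsilon>>0. \<exists>c0 ys. \<forall>x\<in>unit_cube. \<bar>g x - (c0 + ridge \<sigma> ys x)\<bar> \<le> \<epsilon>"
  obtain c1 ys1 where 1: "\<forall>x\<in>unit_cube. \<bar>f x - (c1 + ridge \<sigma> ys1 x)\<bar> \<le> \<epsilon>/2" using f e by (meson half_gt_zero)
  obtain c2 ys2 where 2: "\<forall>x\<in>unit_cube. \<bar>g x - (c2 + ridge \<sigma> ys2 x)\<bar> \<le> \<epsilon>/2" using g e by (meson half_gt_zero)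
  show "\<exists>c0 ys. \<forall>x\<in>unit_cube. \<bar>f x + g x - (c0 + ridge \<sigma> ys x)\<bar> \<le> \<epsilon>"
  proof (intro exI ballI)
    fix x :: "real^'a" assume x: "x \<in> unit_cube"
    have "\<bar>f x - (c1 + ridge \<sigma> ys1 x)\<bar> \<le> \<epsilon>/2" "\<bar>g x - (c2 + ridge \<sigma> ys2 x)\<bar> \<le> \<epsilon>/2" using 1 2 x by auto
    then show "\<bar>f x + g x - ((c1+c2) + ridge \<sigma> (ys1@ys2) x)\<bar> \<le> \<epsilon>"
      unfolding ridge_append by linarith
  qed
qed

lemma RA_const: "RA \<sigma> (\<lambda>x. c)"
  unfolding RA_def by (intro allI impI exI[of _ c] exI[of _ "[]"]) auto

lemma RA_exp:
  fixes \<sigma> :: "real \<Rightarrow> real"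
  assumes cont: "continuous_on UNIV \<sigma>" and lip: "\<And>x y. \<bar>\<sigma> x - \<sigma> y\<bar> \<le> C * \<bar>x - y\<bar>"
    and na: "\<not> affine_fun \<sigma>"
  shows "RA \<sigma> (\<lambda>x. c * exp (lin a x))"
  unfolding RA_def
proof (intro allI impI)
  fix \<epsilon> :: real assume e: "\<epsilon> > 0"
  have "VS \<sigma> (\<lambda>t. c * exp t)"
    by (rule VS_continuous[OF cont lip na]) (intro continuous_intros)
  then obtain xs where xs: "\<forall>t. \<bar>t\<bar> \<le> (\<Sum>j\<in>UNIV. \<bar>a j\<bar>) \<longrightarrow> \<bar>c * exp t - shallow \<sigma> xs t\<bar> \<le> \<epsilon>"
    using e unfolding VS_def by blast
  show "\<exists>c0 ys. \<forall>x\<in>unit_cube. \<bar>c * exp (lin a x) - (c0 + ridge \<sigma> ys x)\<bar> \<le> \<epsilon>"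
  proof (intro exI ballI)
    fix x :: "real^'a" assume "x \<in> unit_cube"
    then have "\<bar>lin a x\<bar> \<le> (\<Sum>j\<in>UNIV. \<bar>a j\<bar>)" by (rule lin_bound)
    then show "\<bar>c * exp (lin a x) - (0 + ridge \<sigma> (map (\<lambda>(c,b,d). (c, (\<lambda>j. b * a j), d)) xs) x)\<bar> \<le> \<epsilon>"
      using xs by (simp add: ridge_shallow)
  qed
qed

lemma expsum_RA:
  fixes \<sigma> :: "real \<Rightarrow> real"
  assumes cont: "continuous_on UNIV \<sigma>" and lip: "\<And>x y. \<bar>\<sigma> x - \<sigma> y\<bar> \<le> C * \<bar>x - y\<bar>"
    and na: "\<not> affine_fun \<sigma>"
  shows "expsum g \<Longrightarrow> RA \<sigma> g"
proof (induction rule: expsum.induct)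
  case (es_const c) show ?case by (rule RA_const)
next
  case (es_exp c a) show ?case by (rule RA_exp[OF cont lip na])
next
  case (es_add f g) show ?case by (rule RA_add[OF es_add.IH])
qed

lemma expsum_mult_exp: "expsum g \<Longrightarrow> expsum (\<lambda>x. (c * exp (lin a x)) * g x)"
proof (induction rule: expsum.induct)
  case (es_const c')
  have eq: "(\<lambda>x. c * exp (lin a x) * c') = (\<lambda>x. (c*c') * exp (lin a x))" by (simp add: mult_ac)
  show ?case unfolding eq by (rule es_exp)
next
  case (es_exp c' a')
  have eq: "(\<lambda>x. c * exp (lin a x) * (c' * exp (lin a' x))) = (\<lambda>x. (c*c') * exp (lin (\<lambda>j. a j + a' j) x))"
    by (simp add: lin_add exp_add mult_ac)
  show ?case unfolding eq by (rule es_exp)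
next
  case (es_add f g)
  have eq: "(\<lambda>x. c * exp (lin a x) * (f x + g x)) = (\<lambda>x. c * exp (lin a x) * f x + c * exp (lin a x) * g x)"
    by (simp add: distrib_left)
  show ?case unfolding eq by (rule expsum.es_add[OF es_add.IH])
qed

lemma expsum_mult: "expsum f \<Longrightarrow> expsum g \<Longrightarrow> expsum (\<lambda>x. f x * g x)"
proof (induction rule: expsum.induct)
  case (es_const c)
  have "expsum (\<lambda>x. c * exp (lin (\<lambda>j. 0) x) * g x)" using expsum_mult_exp es_const by blast
  moreover have "lin (\<lambda>j. 0) x = 0" for x :: "real^'a" by (simp add: lin_def)
  ultimately show ?case by simp
next
  case (es_exp c a)
  then show ?case using expsum_mult_exp by blast
next
  case (es_add f1 f2)
  have "(\<lambda>x. (f1 x + f2 x) * g x) = (\<lambda>x. f1 x * g x + f2 x * g x)"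
    by (simp add: distrib_right)
  moreover have "expsum (\<lambda>x. f1 x * g x)" "expsum (\<lambda>x. f2 x * g x)" using es_add by blast+
  ultimately show ?case by (simp only:) (rule expsum.es_add)
qed

lemma lin_cont: "continuous_on S (lin a)"
  unfolding lin_def[abs_def]
  by (intro continuous_on_sum continuous_on_mult continuous_on_const continuous_on_component continuous_on_id)

lemma expsum_cont: "expsum f \<Longrightarrow> continuous_on S f"
proof (induction rule: expsum.induct)
  case (es_const c) show ?case by (rule continuous_on_const)
next
  case (es_exp c a) show ?case by (intro continuous_on_mult continuous_on_const continuous_on_exp lin_cont)
next
  case (es_add f g) then show ?case by (intro continuous_on_add)
qed

lemma unit_cube_compact: "compact (unit_cube :: (real^'d::finite) set)"
proof -
  have "unit_cube = cbox (0::real^'d) (vec 1)" by (auto simp: unit_cube_def mem_box_cart)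
  then show ?thesis using compact_cbox[of "0::real^'d" "vec 1"] by simp
qed

lemma approx_ridge:
  fixes \<sigma> :: "real \<Rightarrow> real" and f :: "real^'d::finite \<Rightarrow> real"
  assumes cont: "continuous_on UNIV \<sigma>" and lip: "\<And>x y. \<bar>\<sigma> x - \<sigma> y\<bar> \<le> C * \<bar>x - y\<bar>"
    and na: "\<not> affine_fun \<sigma>" and fc: "continuous_on unit_cube f" and e: "\<epsilon> > 0"
  shows "\<exists>c0 ys. \<forall>x\<in>unit_cube. \<bar>f x - (c0 + ridge \<sigma> ys x)\<bar> \<le> \<epsilon>"
proof -
  have "\<exists>g. expsum g \<and> (\<forall>x \<in> unit_cube. \<bar>f x - g x\<bar> < \<epsilon>/2)"
  proof (rule Stone_Weierstrass_HOL[of unit_cube expsum f "\<epsilon>/2"])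
    show "compact (unit_cube :: (real^'d) set)" by (rule unit_cube_compact)
    show "expsum (\<lambda>x. c)" for c by (rule es_const)
    show "expsum f \<Longrightarrow> continuous_on unit_cube f" for f by (rule expsum_cont)
    show "expsum f \<and> expsum g \<Longrightarrow> expsum (\<lambda>x. f x + g x)" for f g by (auto intro: es_add)
    show "expsum f \<and> expsum g \<Longrightarrow> expsum (\<lambda>x. f x * g x)" for f g by (auto intro: expsum_mult)
    show "\<exists>f. expsum f \<and> f x \<noteq> f y" if xy: "x \<in> unit_cube \<and> y \<in> unit_cube \<and> x \<noteq> y" for x y :: "real^'d"
    proof -
      obtain j where j: "x$j \<noteq> y$j" using xy by (metis vec_eq_iff)
      define a where "a = (\<lambda>i. if i = j then (1::real) else 0)"
      have l: "lin a z = z$j" for z :: "real^'d" 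
      proof -
        have "lin a z = (\<Sum>i\<in>UNIV. if i = j then z$i else 0)" unfolding lin_def a_def
          by (intro sum.cong) auto
        then show ?thesis by simp
      qed
      show ?thesis using j es_exp[of 1 a] by (intro exI[of _ "\<lambda>z. 1 * exp (lin a z)"]) (simp add: l)
    qed
  qed (use fc e in auto)
  then obtain g where g: "expsum g" "\<forall>x \<in> unit_cube. \<bar>f x - g x\<bar> < \<epsilon>/2" by blast
  have "RA \<sigma> g" using expsum_RA[OF cont lip na g(1)] .
  then obtain c0 ys where cy: "\<forall>x\<in>unit_cube. \<bar>g x - (c0 + ridge \<sigma> ys x)\<bar> \<le> \<epsilon>/2"
    using e unfolding RA_def by (meson half_gt_zero)
  show ?thesis
  proof (intro exI ballI)
    fix x :: "real^'d" assume x: "x \<in> unit_cube"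
    have "\<bar>f x - g x\<bar> < \<epsilon>/2" "\<bar>g x - (c0 + ridge \<sigma> ys x)\<bar> \<le> \<epsilon>/2" using g(2) cy x by auto
    then show "\<bar>f x - (c0 + ridge \<sigma> ys x)\<bar> \<le> \<epsilon>" by linarith
  qed
qed


lemma iota_approx:
  fixes \<sigma> :: "real \<Rightarrow> real"
  assumes der: "(\<sigma> has_real_derivative d0) (at x0)" and d0: "d0 \<noteq> 0" and \<eta>: "\<eta> > 0" and R0: "R0 \<ge> 0"
  shows "\<exists>h>0. h \<le> 1 \<and> (\<forall>s. \<bar>s\<bar> \<le> R0 \<longrightarrow> \<bar>(\<sigma> (x0+h * s) - \<sigma> x0)/(h*d0) - s\<bar> \<le> \<eta>)"
proof -
  have lim: "((\<lambda>y. (\<sigma> y - \<sigma> x0) / (y - x0)) \<longlongrightarrow> d0) (at x0)"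
    using der by (simp add: has_field_derivative_iff)
  define r where "r = \<eta> * \<bar>d0\<bar> / (R0+1)"
  have r: "r > 0" using \<eta> d0 R0 by (simp add: r_def)
  obtain s where s: "s > 0" "\<And>y. y \<noteq> x0 \<and> norm (y - x0) < s \<Longrightarrow> norm ((\<sigma> y - \<sigma> x0) / (y - x0) - d0) < r"
    using LIM_D[OF lim r] by blast
  define h where "h = min 1 (s / (2*(R0+1)))"
  have h: "h > 0" "h \<le> 1" using s R0 by (auto simp: h_def)
  have "h \<le> s / (2*(R0+1))" by (simp add: h_def)
  then have "h * (R0+1) \<le> s / (2*(R0+1)) * (R0+1)" using R0 by (intro mult_right_mono) auto
  also have "\<dots> = s/2" using R0 by (simp add: field_simps)
  finally have hR: "h * (R0+1) < s" using s by linarith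
  show ?thesis
  proof (intro exI conjI allI impI h)
    fix s' :: real assume s': "\<bar>s'\<bar> \<le> R0"
    show "\<bar>(\<sigma> (x0+h * s') - \<sigma> x0)/(h*d0) - s'\<bar> \<le> \<eta>"
    proof (cases "s' = 0")
      case True then show ?thesis using \<eta> by simp
    next
      case False
      define y where "y = x0 + h * s'"
      have yx: "y - x0 = h * s'" by (simp add: y_def)
      have ne: "y \<noteq> x0" using False h by (simp add: y_def)
      have "\<bar>h * s'\<bar> \<le> h * R0" using s' h by (simp add: abs_mult mult_left_mono)
      moreover have "h * R0 < h * (R0+1)" using h by simp
      ultimately have "norm (y - x0) < s" using hR by (simp add: yx)
      then have "\<bar>(\<sigma> y - \<sigma> x0) / (h * s') - d0\<bar> < r" using s(2)[of y] ne by (simp add: yx)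
      then have "\<bar>((\<sigma> y - \<sigma> x0) - d0*(h * s')) / (h * s')\<bar> < r"
        using False h by (simp add: diff_divide_distrib)
      then have A: "\<bar>(\<sigma> y - \<sigma> x0) - d0*(h * s')\<bar> < r * \<bar>h * s'\<bar>"
        using False h by (simp add: abs_divide pos_divide_less_eq)
      have "(\<sigma> y - \<sigma> x0)/(h*d0) - s' = ((\<sigma> y - \<sigma> x0) - d0*(h * s')) / (h*d0)"
        using h d0 by (simp add: field_simps)
      then have "\<bar>(\<sigma> y - \<sigma> x0)/(h*d0) - s'\<bar> = \<bar>(\<sigma> y - \<sigma> x0) - d0*(h * s')\<bar> / (h*\<bar>d0\<bar>)"
        using h by (simp add: abs_divide abs_mult)
      also have "\<dots> \<le> r * \<bar>h * s'\<bar> / (h*\<bar>d0\<bar>)"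
        using A h d0 by (intro divide_right_mono) auto
      also have "\<dots> = r * \<bar>s'\<bar> / \<bar>d0\<bar>" using h d0 by (simp add: abs_mult)
      also have "\<dots> \<le> r * R0 / \<bar>d0\<bar>" using s' r d0 by (intro divide_right_mono mult_left_mono) auto
      also have "\<dots> = \<eta> * (R0/(R0+1))" using d0 R0 by (simp add: r_def)
      also have "\<dots> \<le> \<eta> * 1" using \<eta> R0 by (intro mult_left_mono) auto
      finally show ?thesis by (simp add: y_def)
    qed
  qed (use h in auto)
qed

lemma sum_if_single:
  fixes v :: "nat \<Rightarrow> real"
  assumes "k \<in> S" "finite S"
  shows "(\<Sum>i\<in>S. (if i = k then a else 0) * v i) = a * v k"
proof -
  have "(\<Sum>i\<in>S. (if i = k then a else 0) * v i) = (\<Sum>i\<in>S. if i = k then a * v k else 0)"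
    by (intro sum.cong) auto
  then show ?thesis using assms by simp
qed

lemma sum_if_two:
  fixes v :: "nat \<Rightarrow> real"
  assumes "k1 \<in> S" "k2 \<in> S" "k1 \<noteq> k2" "finite S"
  shows "(\<Sum>i\<in>S. (if i = k1 then a else if i = k2 then b else 0) * v i) = a * v k1 + b * v k2"
proof -
  have "(\<Sum>i\<in>S. (if i = k1 then a else if i = k2 then b else 0) * v i)
        = (\<Sum>i\<in>S. (if i = k1 then a * v k1 else 0) + (if i = k2 then b * v k2 else 0))"
    using assms(3) by (intro sum.cong) auto
  also have "\<dots> = a * v k1 + b * v k2" using assms by (simp add: sum.distrib)
  finally show ?thesis .
qed

lemma sum_if_idx:
  fixes v :: "nat \<Rightarrow> real" and idx :: "'d::finite \<Rightarrow> nat"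
  assumes "\<And>j. idx j \<in> S" "finite S"
  shows "(\<Sum>i\<in>S. (\<Sum>j\<in>UNIV. if i = idx j then c j else 0) * v i) = (\<Sum>j\<in>UNIV. c j * v (idx j))"
proof -
  have "(\<Sum>i\<in>S. (\<Sum>j\<in>UNIV. if i = idx j then c j else 0) * v i)
      = (\<Sum>i\<in>S. \<Sum>j\<in>UNIV. if i = idx j then c j * v (idx j) else 0)"
    by (intro sum.cong) (auto simp: sum_distrib_right intro!: sum.cong)
  also have "\<dots> = (\<Sum>j\<in>UNIV. \<Sum>i\<in>S. if i = idx j then c j * v (idx j) else 0)"
    by (rule sum.swap)
  also have "\<dots> = (\<Sum>j\<in>UNIV. c j * v (idx j))"
    using assms by (intro sum.cong) (auto simp: sum.delta)
  finally show ?thesis .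
qed

lemma ridge_sum: "ridge \<sigma> ys x = (\<Sum>l<length ys. fst (ys!l) * \<sigma> (lin (fst (snd (ys!l))) x + snd (snd (ys!l))))"
proof -
  have "ridge \<sigma> ys x = sum_list (map (\<lambda>y. fst y * \<sigma> (lin (fst (snd y)) x + snd (snd y))) ys)"
    unfolding ridge_def by (intro arg_cong[where f=sum_list] map_cong) auto
  also have "\<dots> = (\<Sum>l<length ys. fst (ys!l) * \<sigma> (lin (fst (snd (ys!l))) x + snd (snd (ys!l))))"
    by (simp add: sum_list_sum_nth atLeast0LessThan)
  finally show ?thesis .
qed


lemma network:
  fixes p :: nat and B :: "'d::finite \<Rightarrow> nat \<Rightarrow> nat \<Rightarrow> real \<Rightarrow> real" and \<sigma> :: "real \<Rightarrow> real"
    and ys :: "(real \<times> ('d \<Rightarrow> real) \<times> real) list"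
  assumes width: "p \<ge> CARD('d) + 3"
    and basis: "\<And>j k. k \<in> {1..p} \<Longrightarrow> basis_functions (B j k)"
    and lipC: "\<And>x y. \<bar>\<sigma> x - \<sigma> y\<bar> \<le> C\<sigma> * \<bar>x - y\<bar>" and C0: "C\<sigma> \<ge> 0"
    and der: "(\<sigma> has_real_derivative d0) (at x0)" and d0: "d0 \<noteq> 0"
    and e0: "tol > 0"
  shows "\<exists>L\<ge>1. \<exists>q::'d\<Rightarrow>nat\<Rightarrow>nat. (\<forall>j. \<forall>k\<in>{1..p}. q j k \<ge> 1) \<and>
           (\<exists>c W bb w b. \<forall>x\<in>unit_cube. \<bar>(czero + ridge \<sigma> ys x) - HDANN1 \<sigma> B p L q c W bb w b x\<bar> \<le> tol)"
proof -
  define n where "n = CARD('d)"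
  define N where "N = length ys"
  define \<gamma> where "\<gamma> l = fst (ys!l)" for l
  define \<beta> where "\<beta> l = fst (snd (ys!l))" for l
  define \<theta> where "\<theta> l = snd (snd (ys!l))" for l
  define tm where "tm l x = \<sigma> (lin (\<beta> l) x + \<theta> l)" for l x
  define T where "T k x = (\<Sum>l<k. \<gamma> l * tm l x)" for k x
  define B\<beta> where "B\<beta> = (\<Sum>l<N. \<Sum>j\<in>UNIV. \<bar>\<beta> l j\<bar>)"
  define B\<theta> where "B\<theta> = (\<Sum>l<N. \<bar>\<theta> l\<bar>)"
  define G where "G = (\<Sum>l<N. \<bar>\<gamma> l\<bar>)"
  define Stm where "Stm = \<bar>\<sigma> 0\<bar> + C\<sigma> * (B\<beta> + B\<theta>)"
  define R0 where "R0 = G * Stm + 3"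
  define Cs where "Cs = C\<sigma> + 1"
  define K where "K = (real N + 2) * (1 + G * Cs * (B\<beta> * (real N + 1) + 1))"
  have B\<beta>0: "B\<beta> \<ge> 0" unfolding B\<beta>_def by (intro sum_nonneg) auto
  have B\<theta>0: "B\<theta> \<ge> 0" unfolding B\<theta>_def by (intro sum_nonneg) auto
  have G0: "G \<ge> 0" unfolding G_def by (intro sum_nonneg) auto
  have Stm0: "Stm \<ge> 0" unfolding Stm_def using C0 B\<beta>0 B\<theta>0 by simp
  have Cs1: "Cs \<ge> 1" using C0 by (simp add: Cs_def)
  have K1: "K \<ge> real N + 2"
  proof -
    have "0 \<le> G * Cs * (B\<beta> * (real N + 1) + 1)" using G0 Cs1 B\<beta>0 by simp
    then have "1 \<le> 1 + G * Cs * (B\<beta> * (real N + 1) + 1)" by simp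
    then show ?thesis unfolding K_def by (metis mult_left_mono mult.right_neutral of_nat_0_le_iff add_nonneg_nonneg zero_le_numeral)
  qed
  have Kpos: "K > 0" using K1 by linarith
  define \<eta> where "\<eta> = min tol 1 / K"
  have \<eta>: "\<eta> > 0" using e0 Kpos by (simp add: \<eta>_def)
  define F where "F = Cs * (B\<beta> * (real N + 1) + 1) * \<eta>"
  define E1 where "E1 = \<eta> + G * F"
  have F0: "F \<ge> Cs * \<eta>" unfolding F_def using \<eta> Cs1 B\<beta>0
    by (simp add: mult_left_mono mult_right_mono)
  have F00: "F \<ge> 0" using F0 Cs1 \<eta> by (smt (verit) mult_pos_pos)
  have E1\<eta>: "E1 \<ge> \<eta>" using G0 F00 by (simp add: E1_def)
  have KE: "(real N + 2) * E1 = K * \<eta>" by (simp add: K_def E1_def F_def algebra_simps)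
  have K\<eta>: "K * \<eta> = min tol 1" using Kpos by (simp add: \<eta>_def)
  have E1b: "(real N + 2) * E1 \<le> tol" "(real N + 2) * E1 \<le> 1" using KE K\<eta> by auto
  have E1pos: "E1 > 0" using E1\<eta> \<eta> by linarith
  have NE1: "(real N + 1) * E1 \<le> 1" using E1b(2) E1pos by (smt (verit) mult_right_mono)
  have N\<eta>: "(real N + 1) * \<eta> \<le> 1" using NE1 E1\<eta> by (smt (verit) mult_left_mono of_nat_0_le_iff)
  obtain h where h: "h > 0" "h \<le> 1" and iota: "\<And>s. \<bar>s\<bar> \<le> R0 \<Longrightarrow> \<bar>(\<sigma> (x0 + h * s) - \<sigma> x0)/(h * d0) - s\<bar> \<le> \<eta>"
    using iota_approx[OF der d0 \<eta>, of R0] G0 Stm0 unfolding R0_def by auto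
  define \<iota> where "\<iota> s = (\<sigma> (x0 + h * s) - \<sigma> x0)/(h * d0)" for s
  have iota': "\<bar>s\<bar> \<le> R0 \<Longrightarrow> \<bar>\<iota> s - s\<bar> \<le> \<eta>" for s using iota by (simp add: \<iota>_def)
  have iota_v: "(\<sigma> (x0 + h * r) - \<sigma> x0) / d0 = h * \<iota> r" for r using h by (simp add: \<iota>_def)
  define \<delta>1 where "\<delta>1 = h * \<eta> / (real n + 1)"
  have \<delta>1: "\<delta>1 > 0" using h \<eta> by (simp add: \<delta>1_def)
  have n\<delta>1: "real n * \<delta>1 \<le> h * \<eta>"
  proof -
    have "real n * \<delta>1 = (h * \<eta>) * (real n / (real n + 1))" by (simp add: \<delta>1_def)
    also have "\<dots> \<le> (h * \<eta>) * 1" using h \<eta> by (intro mult_left_mono) auto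
    finally show ?thesis by simp
  qed
  have n\<delta>1': "real n * \<delta>1 \<le> \<eta>" using n\<delta>1 h \<eta> by (smt (verit) mult_right_mono mult_cancel_right1)
  obtain g :: "'d \<Rightarrow> nat" where g: "bij_betw g UNIV {0..<n}"
    using ex_bij_betw_finite_nat[of "UNIV :: 'd set"] by (auto simp: n_def)
  define idx where "idx j = g j + 1" for j
  have idx_inj: "idx j = idx j' \<longleftrightarrow> j = j'" for j j'
    using g unfolding idx_def bij_betw_def inj_on_def by auto
  have idx_range: "1 \<le> idx j" "idx j \<le> n" for j
  proof -
    have "g j \<in> {0..<n}" using g unfolding bij_betw_def by blast
    then show "1 \<le> idx j" "idx j \<le> n" unfolding idx_def by auto
  qed
  define cu where "cu = n + 1"
  define au where "au = n + 2"
  have pn: "n + 3 \<le> p" using width by (simp add: n_def)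
  have cu_in: "cu \<in> {1..p}" and au_in: "au \<in> {1..p}" using pn by (auto simp: cu_def au_def)
  have idx_in: "idx j \<in> {1..p}" for j using idx_range[of j] pn by auto
  have cu_idx: "cu \<noteq> idx j" "au \<noteq> idx j" for j using idx_range[of j] by (auto simp: cu_def au_def)
  have au_cu: "au \<noteq> cu" by (simp add: au_def cu_def)
  define a where "a j k = (if k = idx j then h else 0) + (if k = cu then \<beta> 0 j else 0)" for j k
  define t1 where "t1 k = (if k = cu then \<theta> 0 else x0)" for k
  define P where "P j k z \<longleftrightarrow> (k \<in> {1..p} \<longrightarrow> (fst z \<ge> 1 \<and> (\<forall>s\<in>{0..1}.
      \<bar>a j k * s - ((\<Sum>r=1..fst z. fst (snd z) r * B j k r s) + snd (snd z))\<bar> \<le> \<delta>1)))"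
    for j k and z :: "nat \<times> (nat \<Rightarrow> real) \<times> real"
  have exP: "\<exists>z. P j k z" for j k
  proof (cases "k \<in> {1..p}")
    case True
    have cont: "continuous_on {0..1} (\<lambda>s. a j k * s)" by (intro continuous_intros)
    have bf: "basis_functions (B j k)" by (rule basis[OF True])
    have ex: "\<exists>Q\<ge>1. \<exists>cs c'. \<exists>\<delta><\<delta>1. \<forall>s\<in>{0..1}. \<bar>a j k * s - ((\<Sum>r=1..Q. cs r * B j k r s) + c')\<bar> \<le> \<delta>"
      using bf[unfolded basis_functions_def, rule_format, OF cont \<delta>1] by simp
    obtain Q cs c' \<delta> where Q1: "Q \<ge> 1" and \<delta>2: "\<delta> < \<delta>1"
      and S: "\<forall>s\<in>{0..1}. \<bar>a j k * s - ((\<Sum>r=1..Q. cs r * B j k r s) + c')\<bar> \<le> \<delta>"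
      using ex by blast
    have "\<forall>s\<in>{0..1}. \<bar>a j k * s - ((\<Sum>r=1..Q. cs r * B j k r s) + c')\<bar> \<le> \<delta>1"
    proof
      fix s :: real assume "s \<in> {0..1}"
      then have "\<bar>a j k * s - ((\<Sum>r=1..Q. cs r * B j k r s) + c')\<bar> \<le> \<delta>" using S by blast
      then show "\<bar>a j k * s - ((\<Sum>r=1..Q. cs r * B j k r s) + c')\<bar> \<le> \<delta>1" using \<delta>2 by linarith
    qed
    then have "P j k (Q, cs, c')" unfolding P_def using Q1 by simp
    then show ?thesis by blast
  next
    case False then show ?thesis unfolding P_def by blast
  qed
  define Z where "Z j k = (SOME z. P j k z)" for j k
  have PZ: "P j k (Z j k)" for j k unfolding Z_def using exP by (rule someI_ex)
  define q where "q j k = fst (Z j k)" for j k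
  define c where "c j k r = fst (snd (Z j k)) r" for j k r
  define \<kappa> where "\<kappa> j k = snd (snd (Z j k))" for j k
  have qge: "\<forall>j. \<forall>k\<in>{1..p}. q j k \<ge> 1" using PZ unfolding P_def q_def by blast
  have approx1: "k \<in> {1..p} \<Longrightarrow> s \<in> {0..1} \<Longrightarrow>
      \<bar>a j k * s - ((\<Sum>r=1..q j k. c j k r * B j k r s) + \<kappa> j k)\<bar> \<le> \<delta>1" for j k s
    using PZ[of j k] unfolding P_def q_def c_def \<kappa>_def by blast
  define bb where "bb l k = (if l = 1 then t1 k + (\<Sum>j\<in>UNIV. \<kappa> j k)
      else if (1 \<le> k \<and> k \<le> n) \<or> k = au then x0 - \<sigma> x0 / d0
      else if k = cu then \<theta> (l - 1) - (\<Sum>j\<in>UNIV. \<beta> (l - 1) j * \<sigma> x0 / (h * d0))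
      else 0)" for l k
  define W where "W l k i = (if 1 \<le> k \<and> k \<le> n then (if i = k then 1 / d0 else 0)
      else if k = cu then (\<Sum>j\<in>UNIV. if i = idx j then \<beta> (l - 1) j / (h * d0) else 0)
      else if k = au then (if i = au then 1 / d0 else if i = cu then h * \<gamma> (l - 2) else 0)
      else 0)" for l k i
  define w where "w k = (if k = au then 1 / (h * d0) else 0)" for k
  define b where "b = czero - \<sigma> x0 / (h * d0)"
  define L where "L = N + 1"
  have \<gamma>G: "l < N \<Longrightarrow> \<bar>\<gamma> l\<bar> \<le> G" for l
    unfolding G_def by (rule member_le_sum) auto
  have \<beta>B: "l < N \<Longrightarrow> (\<Sum>j\<in>UNIV. \<bar>\<beta> l j\<bar>) \<le> B\<beta>" for l
    unfolding B\<beta>_def by (rule member_le_sum[where f="\<lambda>l. \<Sum>j\<in>UNIV. \<bar>\<beta> l j\<bar>"]) (auto intro: sum_nonneg)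
  have \<theta>B: "l < N \<Longrightarrow> \<bar>\<theta> l\<bar> \<le> B\<theta>" for l
    unfolding B\<theta>_def by (rule member_le_sum) auto
  have tmB: "l < N \<Longrightarrow> x \<in> unit_cube \<Longrightarrow> \<bar>tm l x\<bar> \<le> Stm" for l x
  proof -
    assume l: "l < N" and x: "x \<in> unit_cube"
    have "\<bar>lin (\<beta> l) x\<bar> \<le> B\<beta>" using lin_bound[OF x, of "\<beta> l"] \<beta>B[OF l] by linarith
    then have z: "\<bar>lin (\<beta> l) x + \<theta> l\<bar> \<le> B\<beta> + B\<theta>" using \<theta>B[OF l] by linarith
    have "\<bar>tm l x - \<sigma> 0\<bar> \<le> C\<sigma> * \<bar>lin (\<beta> l) x + \<theta> l\<bar>" using lipC[of "lin (\<beta> l) x + \<theta> l" 0] by (simp add: tm_def)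
    also have "\<dots> \<le> C\<sigma> * (B\<beta> + B\<theta>)" using z C0 by (rule mult_left_mono)
    finally show ?thesis unfolding Stm_def by linarith
  qed
  have TB: "k \<le> N \<Longrightarrow> x \<in> unit_cube \<Longrightarrow> \<bar>T k x\<bar> \<le> G * Stm" for k x
  proof -
    assume k: "k \<le> N" and x: "x \<in> unit_cube"
    have "\<bar>T k x\<bar> \<le> (\<Sum>l<k. \<bar>\<gamma> l\<bar> * \<bar>tm l x\<bar>)" unfolding T_def by (rule order_trans[OF sum_abs]) (simp add: abs_mult)
    also have "\<dots> \<le> (\<Sum>l<k. \<bar>\<gamma> l\<bar> * Stm)" using k x by (intro sum_mono mult_left_mono tmB) auto
    also have "\<dots> \<le> (\<Sum>l<N. \<bar>\<gamma> l\<bar> * Stm)" using k Stm0 by (intro sum_mono2) auto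
    also have "\<dots> = G * Stm" by (simp add: G_def sum_distrib_right)
    finally show ?thesis .
  qed
  show ?thesis
  proof (intro exI conjI)
    show "L \<ge> 1" by (simp add: L_def)
    show "\<forall>j. \<forall>k\<in>{1..p}. q j k \<ge> 1" by (rule qge)
    show "\<forall>x\<in>unit_cube. \<bar>(czero + ridge \<sigma> ys x) - HDANN1 \<sigma> B p L q c W bb w b x\<bar> \<le> tol"
    proof
      fix x :: "real^'d" assume x: "x \<in> unit_cube"
      have x01: "x$j \<in> {0..1}" for j using x by (auto simp: unit_cube_def)
      define H where "H l k = hdann1_hidden \<sigma> B p q c W bb x l k" for l k
      define Inv where "Inv l' \<longleftrightarrow>
          (\<forall>j. \<exists>r. H (Suc l') (idx j) = \<sigma> (x0 + h * r) \<and> \<bar>r - x$j\<bar> \<le> real (Suc l') * \<eta>) \<and>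
          (l' < N \<longrightarrow> \<bar>H (Suc l') cu - tm l' x\<bar> \<le> F) \<and>
          (\<exists>m. H (Suc l') au = \<sigma> (x0 + h * m) \<and> \<bar>m - T l' x\<bar> \<le> real (Suc l') * E1)" for l'
      have H1: "H (Suc 0) k = \<sigma> ((\<Sum>j\<in>UNIV. \<Sum>r=1..q j k. c j k r * B j k r (x$j)) + bb 1 k)" for k
        by (simp add: H_def)
      have HS: "H (Suc (Suc l)) k = \<sigma> ((\<Sum>i=1..p. W (Suc (Suc l)) k i * H (Suc l) i) + bb (Suc (Suc l)) k)" for l k
        by (simp add: H_def)
      have L1: "\<exists>E. \<bar>E\<bar> \<le> h * \<eta> \<and> H (Suc 0) k = \<sigma> (t1 k + (\<Sum>j\<in>UNIV. a j k * x$j) + E)"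
        if k: "k \<in> {1..p}" for k
      proof -
        define E where "E = (\<Sum>j\<in>UNIV. (\<Sum>r=1..q j k. c j k r * B j k r (x$j)) - (a j k * x$j - \<kappa> j k))"
        have "\<bar>E\<bar> \<le> (\<Sum>j\<in>UNIV. \<bar>(\<Sum>r=1..q j k. c j k r * B j k r (x$j)) - (a j k * x$j - \<kappa> j k)\<bar>)"
          unfolding E_def by (rule sum_abs)
        also have "\<dots> \<le> (\<Sum>j\<in>(UNIV::'d set). \<delta>1)"
        proof (rule sum_mono)
          fix j
          have "\<bar>a j k * x$j - ((\<Sum>r=1..q j k. c j k r * B j k r (x$j)) + \<kappa> j k)\<bar> \<le> \<delta>1"
            using approx1[OF k x01[of j]] .
          then show "\<bar>(\<Sum>r=1..q j k. c j k r * B j k r (x$j)) - (a j k * x$j - \<kappa> j k)\<bar> \<le> \<delta>1"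
            by (simp add: abs_minus_commute algebra_simps)
        qed
        also have "\<dots> = real n * \<delta>1" by (simp add: n_def)
        also have "\<dots> \<le> h * \<eta>" by (rule n\<delta>1)
        finally have Eb: "\<bar>E\<bar> \<le> h * \<eta>" .
        have "(\<Sum>j\<in>UNIV. \<Sum>r=1..q j k. c j k r * B j k r (x$j)) + bb 1 k
              = (\<Sum>j\<in>UNIV. (a j k * x$j - \<kappa> j k)) + E + (t1 k + (\<Sum>j\<in>UNIV. \<kappa> j k))"
          unfolding E_def bb_def by (simp add: sum_subtractf)
        also have "\<dots> = t1 k + (\<Sum>j\<in>UNIV. a j k * x$j) + E" by (simp add: sum_subtractf)
        finally show ?thesis using Eb H1[of k] by auto
      qed
      have reg_sum: "(\<Sum>j\<in>UNIV. a j (idx j0) * x$j) = h * x$j0" for j0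
      proof -
        have "(\<Sum>j\<in>UNIV. a j (idx j0) * x$j) = (\<Sum>j\<in>UNIV. if j = j0 then h * x$j else 0)"
          using cu_idx by (intro sum.cong) (auto simp: a_def idx_inj)
        then show ?thesis by simp
      qed
      have cu_sum: "(\<Sum>j\<in>UNIV. a j cu * x$j) = lin (\<beta> 0) x"
        unfolding lin_def using cu_idx by (intro sum.cong) (auto simp: a_def)
      have au_sum: "(\<Sum>j\<in>UNIV. a j au * x$j) = 0"
        using cu_idx au_cu by (intro sum.neutral) (auto simp: a_def)
      have Inv0: "Inv 0"
        unfolding Inv_def
      proof (intro conjI allI impI)
        fix j
        obtain E where E: "\<bar>E\<bar> \<le> h * \<eta>" "H (Suc 0) (idx j) = \<sigma> (t1 (idx j) + (\<Sum>j'\<in>UNIV. a j' (idx j) * x$j') + E)"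
          using L1[OF idx_in[of j]] by blast
        have "H (Suc 0) (idx j) = \<sigma> (t1 (idx j) + h * x$j + E)" using E(2) by (simp only: reg_sum)
        then have "H (Suc 0) (idx j) = \<sigma> (x0 + h * (x$j + E/h))"
          using cu_idx[of j] h by (simp add: t1_def distrib_left add.assoc)
        moreover have "\<bar>(x$j + E/h) - x$j\<bar> \<le> real (Suc 0) * \<eta>"
          using E(1) h by (simp add: abs_divide pos_divide_le_eq mult.commute)
        ultimately show "\<exists>r. H (Suc 0) (idx j) = \<sigma> (x0 + h * r) \<and> \<bar>r - x$j\<bar> \<le> real (Suc 0) * \<eta>" by blast
      next
        assume "0 < N"
        obtain E where E: "\<bar>E\<bar> \<le> h * \<eta>" "H (Suc 0) cu = \<sigma> (t1 cu + (\<Sum>j'\<in>UNIV. a j' cu * x$j') + E)"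
          using L1[OF cu_in] by blast
        have "H (Suc 0) cu = \<sigma> (t1 cu + lin (\<beta> 0) x + E)" using E(2) by (simp only: cu_sum)
        then have "H (Suc 0) cu = \<sigma> ((lin (\<beta> 0) x + \<theta> 0) + E)" by (simp add: t1_def algebra_simps)
        then have "\<bar>H (Suc 0) cu - tm 0 x\<bar> \<le> C\<sigma> * \<bar>E\<bar>"
          using lipC[of "(lin (\<beta> 0) x + \<theta> 0) + E" "lin (\<beta> 0) x + \<theta> 0"] by (simp add: tm_def)
        also have "\<dots> \<le> Cs * \<eta>"
        proof -
          have "h * \<eta> \<le> 1 * \<eta>" using h \<eta> by (intro mult_right_mono) auto
          then have "\<bar>E\<bar> \<le> \<eta>" using E(1) by linarith
          then have "C\<sigma> * \<bar>E\<bar> \<le> C\<sigma> * \<eta>" using C0 by (rule mult_left_mono)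
          also have "\<dots> \<le> Cs * \<eta>" using \<eta> by (simp add: Cs_def)
          finally show ?thesis .
        qed
        also have "\<dots> \<le> F" by (rule F0)
        finally show "\<bar>H (Suc 0) cu - tm 0 x\<bar> \<le> F" .
      next
        obtain E where E: "\<bar>E\<bar> \<le> h * \<eta>" "H (Suc 0) au = \<sigma> (t1 au + (\<Sum>j'\<in>UNIV. a j' au * x$j') + E)"
          using L1[OF au_in] by blast
        have "H (Suc 0) au = \<sigma> (t1 au + 0 + E)" using E(2) by (simp only: au_sum)
        then have "H (Suc 0) au = \<sigma> (x0 + h * (E/h))"
          using au_cu h by (simp add: t1_def)
        moreover have "\<bar>E/h - T 0 x\<bar> \<le> real (Suc 0) * E1"
        proof -
          have "\<bar>E/h\<bar> \<le> \<eta>" using E(1) h by (simp add: abs_divide pos_divide_le_eq mult.commute)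
          then show ?thesis using E1\<eta> by (simp add: T_def)
        qed
        ultimately show "\<exists>m. H (Suc 0) au = \<sigma> (x0 + h * m) \<and> \<bar>m - T 0 x\<bar> \<le> real (Suc 0) * E1" by blast
      qed
      have InvS: "Inv (Suc l')" if IH: "Inv l'" and lN: "Suc l' \<le> N" for l'
      proof -
        have "\<forall>j. \<exists>r. H (Suc l') (idx j) = \<sigma> (x0 + h * r) \<and> \<bar>r - x$j\<bar> \<le> real (Suc l') * \<eta>"
          using IH unfolding Inv_def by blast
        then have "\<exists>r. \<forall>j. H (Suc l') (idx j) = \<sigma> (x0 + h * r j) \<and> \<bar>r j - x$j\<bar> \<le> real (Suc l') * \<eta>"
          by (rule choice)
        then obtain r where r0: "\<forall>j. H (Suc l') (idx j) = \<sigma> (x0 + h * r j) \<and> \<bar>r j - x$j\<bar> \<le> real (Suc l') * \<eta>"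
          by blast
        then have r: "\<And>j. H (Suc l') (idx j) = \<sigma> (x0 + h * r j)" "\<And>j. \<bar>r j - x$j\<bar> \<le> real (Suc l') * \<eta>"
          by auto
        obtain m where m: "H (Suc l') au = \<sigma> (x0 + h * m)" "\<bar>m - T l' x\<bar> \<le> real (Suc l') * E1"
          using IH unfolding Inv_def by blast
        have Cl: "\<bar>H (Suc l') cu - tm l' x\<bar> \<le> F" using IH lN unfolding Inv_def by auto
        have lN1: "real (Suc l') \<le> real N + 1" "real (Suc (Suc l')) \<le> real N + 1" using lN by auto
        have rR: "\<bar>r j\<bar> \<le> R0" for j
        proof -
          have "real (Suc l') * \<eta> \<le> (real N + 1) * \<eta>" using lN1 \<eta> by (intro mult_right_mono) auto
          then have "\<bar>r j - x$j\<bar> \<le> 1" using r(2)[of j] N\<eta> by linarith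
          moreover have "\<bar>x$j\<bar> \<le> 1" using x01[of j] by auto
          moreover have "\<bar>r j\<bar> \<le> \<bar>r j - x$j\<bar> + \<bar>x$j\<bar>" using abs_triangle_ineq[of "r j - x$j" "x$j"] by simp
          moreover have "G * Stm \<ge> 0" using G0 Stm0 by simp
          ultimately show ?thesis unfolding R0_def by linarith
        qed
        have ss1: "Suc (Suc l') - 1 = Suc l'" and ss2: "Suc (Suc l') - 2 = l'" by auto
        have ir: "\<bar>\<iota> (r j) - x$j\<bar> \<le> real (Suc (Suc l')) * \<eta>" for j
          using iota'[OF rR[of j]] r(2)[of j] by (simp add: algebra_simps)
        show ?thesis
          unfolding Inv_def
        proof (intro conjI allI impI)
          fix j
          have W1: "W (Suc (Suc l')) (idx j) i = (if i = idx j then 1/d0 else 0)" for i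
            using idx_range[of j] by (simp add: W_def)
          have e1: "(\<Sum>i=1..p. W (Suc (Suc l')) (idx j) i * H (Suc l') i) = 1/d0 * H (Suc l') (idx j)"
            unfolding W1 using idx_in[of j] by (intro sum_if_single) auto
          have e2: "bb (Suc (Suc l')) (idx j) = x0 - \<sigma> x0 / d0" using idx_range[of j] by (simp add: bb_def)
          have "H (Suc (Suc l')) (idx j) = \<sigma> (1/d0 * \<sigma> (x0 + h * r j) + (x0 - \<sigma> x0 / d0))"
            by (simp only: HS e1 e2 r(1))
          also have "\<dots> = \<sigma> (x0 + (\<sigma> (x0 + h * r j) - \<sigma> x0) / d0)"
            by (rule arg_cong[where f=\<sigma>]) (simp add: diff_divide_distrib)
          finally have "H (Suc (Suc l')) (idx j) = \<sigma> (x0 + (\<sigma> (x0 + h * r j) - \<sigma> x0) / d0)" .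
          then have "H (Suc (Suc l')) (idx j) = \<sigma> (x0 + h * \<iota> (r j))" using iota_v by simp
          then show "\<exists>r. H (Suc (Suc l')) (idx j) = \<sigma> (x0 + h * r) \<and> \<bar>r - x$j\<bar> \<le> real (Suc (Suc l')) * \<eta>"
            using ir by blast
        next
          assume lN': "Suc l' < N"
          have cu_rng: "\<not> (1 \<le> cu \<and> cu \<le> n)" by (simp add: cu_def)
          have W2: "W (Suc (Suc l')) cu i = (\<Sum>j\<in>UNIV. if i = idx j then \<beta> (Suc l') j / (h * d0) else 0)" for i
            unfolding W_def ss1 by (simp add: cu_def)
          have e1: "(\<Sum>i=1..p. W (Suc (Suc l')) cu i * H (Suc l') i) = (\<Sum>j\<in>UNIV. \<beta> (Suc l') j / (h * d0) * H (Suc l') (idx j))"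
            unfolding W2 using idx_in by (intro sum_if_idx) auto
          have e2: "bb (Suc (Suc l')) cu = \<theta> (Suc l') - (\<Sum>j\<in>UNIV. \<beta> (Suc l') j * \<sigma> x0 / (h * d0))"
            unfolding bb_def ss1 by (simp add: cu_def au_def)
          have "H (Suc (Suc l')) cu = \<sigma> ((\<Sum>j\<in>UNIV. \<beta> (Suc l') j / (h * d0) * H (Suc l') (idx j))
                   + (\<theta> (Suc l') - (\<Sum>j\<in>UNIV. \<beta> (Suc l') j * \<sigma> x0 / (h * d0))))"
            by (simp only: HS e1 e2)
          also have "\<dots> = \<sigma> ((\<Sum>j\<in>UNIV. \<beta> (Suc l') j / (h * d0) * H (Suc l') (idx j))
                   - (\<Sum>j\<in>UNIV. \<beta> (Suc l') j * \<sigma> x0 / (h * d0)) + \<theta> (Suc l'))"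
            by (rule arg_cong[where f=\<sigma>]) simp
          also have "(\<Sum>j\<in>UNIV. \<beta> (Suc l') j / (h * d0) * H (Suc l') (idx j)) - (\<Sum>j\<in>UNIV. \<beta> (Suc l') j * \<sigma> x0 / (h * d0))
                   = (\<Sum>j\<in>UNIV. \<beta> (Suc l') j * \<iota> (r j))"
            unfolding sum_subtractf[symmetric] r(1) by (intro sum.cong) (auto simp: \<iota>_def diff_divide_distrib algebra_simps)
          finally have Hc: "H (Suc (Suc l')) cu = \<sigma> ((\<Sum>j\<in>UNIV. \<beta> (Suc l') j * \<iota> (r j)) + \<theta> (Suc l'))" .
          have "\<bar>(\<Sum>j\<in>UNIV. \<beta> (Suc l') j * \<iota> (r j)) - lin (\<beta> (Suc l')) x\<bar>
                = \<bar>\<Sum>j\<in>UNIV. \<beta> (Suc l') j * (\<iota> (r j) - x$j)\<bar>"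
            unfolding lin_def sum_subtractf[symmetric] by (simp add: algebra_simps)
          also have "\<dots> \<le> (\<Sum>j\<in>UNIV. \<bar>\<beta> (Suc l') j\<bar> * (real (Suc (Suc l')) * \<eta>))"
          proof (rule order_trans[OF sum_abs], rule sum_mono)
            fix j
            show "\<bar>\<beta> (Suc l') j * (\<iota> (r j) - x$j)\<bar> \<le> \<bar>\<beta> (Suc l') j\<bar> * (real (Suc (Suc l')) * \<eta>)"
              unfolding abs_mult by (rule mult_left_mono[OF ir]) simp
          qed
          also have "\<dots> = (\<Sum>j\<in>UNIV. \<bar>\<beta> (Suc l') j\<bar>) * (real (Suc (Suc l')) * \<eta>)"
            by (simp add: sum_distrib_right)
          also have "\<dots> \<le> B\<beta> * ((real N + 1) * \<eta>)"
            using \<beta>B[OF lN'] lN1 \<eta> B\<beta>0 by (intro mult_mono) (auto intro: sum_nonneg)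
          finally have dif: "\<bar>(\<Sum>j\<in>UNIV. \<beta> (Suc l') j * \<iota> (r j)) - lin (\<beta> (Suc l')) x\<bar> \<le> B\<beta> * ((real N + 1) * \<eta>)" .
          have "\<bar>H (Suc (Suc l')) cu - tm (Suc l') x\<bar> \<le> C\<sigma> * \<bar>(\<Sum>j\<in>UNIV. \<beta> (Suc l') j * \<iota> (r j)) - lin (\<beta> (Suc l')) x\<bar>"
            unfolding Hc tm_def using lipC[of "(\<Sum>j\<in>UNIV. \<beta> (Suc l') j * \<iota> (r j)) + \<theta> (Suc l')" "lin (\<beta> (Suc l')) x + \<theta> (Suc l')"]
            by simp
          also have "\<dots> \<le> C\<sigma> * (B\<beta> * ((real N + 1) * \<eta>))" using dif C0 by (rule mult_left_mono)
          also have "\<dots> \<le> F"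
          proof -
            have "C\<sigma> * (B\<beta> * ((real N + 1) * \<eta>)) \<le> Cs * (B\<beta> * ((real N + 1) * \<eta>))"
              using B\<beta>0 \<eta> by (intro mult_right_mono) (auto simp: Cs_def)
            also have "\<dots> \<le> F" unfolding F_def using Cs1 \<eta> by (simp add: algebra_simps)
            finally show ?thesis .
          qed
          finally show "\<bar>H (Suc (Suc l')) cu - tm (Suc l') x\<bar> \<le> F" .
        next
          have au_rng: "\<not> (1 \<le> au \<and> au \<le> n)" by (simp add: au_def)
          have W3: "W (Suc (Suc l')) au i = (if i = au then 1/d0 else if i = cu then h * \<gamma> l' else 0)" for i
            unfolding W_def ss2 by (simp add: cu_def au_def)
          have e1: "(\<Sum>i=1..p. W (Suc (Suc l')) au i * H (Suc l') i) = 1/d0 * H (Suc l') au + h * \<gamma> l' * H (Suc l') cu"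
            unfolding W3 using au_in cu_in au_cu by (intro sum_if_two) auto
          have e2: "bb (Suc (Suc l')) au = x0 - \<sigma> x0 / d0" by (simp add: bb_def)
          have "H (Suc (Suc l')) au = \<sigma> ((1/d0 * \<sigma> (x0 + h * m) + h * \<gamma> l' * H (Suc l') cu) + (x0 - \<sigma> x0 / d0))"
            by (simp only: HS e1 e2 m(1))
          also have "\<dots> = \<sigma> (x0 + (\<sigma> (x0 + h * m) - \<sigma> x0) / d0 + h * \<gamma> l' * H (Suc l') cu)"
            by (rule arg_cong[where f=\<sigma>]) (simp add: diff_divide_distrib)
          finally have "H (Suc (Suc l')) au = \<sigma> (x0 + (\<sigma> (x0 + h * m) - \<sigma> x0) / d0 + h * \<gamma> l' * H (Suc l') cu)" .
          then have Ha: "H (Suc (Suc l')) au = \<sigma> (x0 + h * (\<iota> m + \<gamma> l' * H (Suc l') cu))"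
            using iota_v by (simp add: algebra_simps)
          have mR: "\<bar>m\<bar> \<le> R0"
          proof -
            have "real (Suc l') * E1 \<le> (real N + 1) * E1" using lN1 E1pos by (intro mult_right_mono) auto
            then have "\<bar>m - T l' x\<bar> \<le> 1" using m(2) NE1 by linarith
            moreover have "\<bar>T l' x\<bar> \<le> G * Stm" using TB[OF _ x] lN by auto
            ultimately show ?thesis unfolding R0_def by linarith
          qed
          have TS: "T (Suc l') x = T l' x + \<gamma> l' * tm l' x" by (simp add: T_def)
          have "\<bar>\<gamma> l' * H (Suc l') cu - \<gamma> l' * tm l' x\<bar> \<le> G * F"
          proof -
            have "\<bar>\<gamma> l' * H (Suc l') cu - \<gamma> l' * tm l' x\<bar> = \<bar>\<gamma> l'\<bar> * \<bar>H (Suc l') cu - tm l' x\<bar>"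
              by (simp add: abs_mult[symmetric] algebra_simps)
            also have "\<dots> \<le> G * F" using \<gamma>G[of l'] lN Cl by (intro mult_mono) auto
            finally show ?thesis .
          qed
          then have "\<bar>(\<iota> m + \<gamma> l' * H (Suc l') cu) - T (Suc l') x\<bar> \<le> \<eta> + real (Suc l') * E1 + G * F"
            using iota'[OF mR] m(2) unfolding TS by linarith
          also have "\<dots> = real (Suc (Suc l')) * E1" by (simp add: E1_def algebra_simps)
          finally show "\<exists>m. H (Suc (Suc l')) au = \<sigma> (x0 + h * m) \<and> \<bar>m - T (Suc l') x\<bar> \<le> real (Suc (Suc l')) * E1"
            using Ha by blast
        qed
      qed
      have InvAll: "l' \<le> N \<Longrightarrow> Inv l'" for l'
      proof (induction l')
        case 0 show ?case by (rule Inv0)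
      next
        case (Suc l') then show ?case using InvS by auto
      qed
      obtain m where m: "H (Suc N) au = \<sigma> (x0 + h * m)" "\<bar>m - T N x\<bar> \<le> real (Suc N) * E1"
        using InvAll[of N] unfolding Inv_def by blast
      have mR: "\<bar>m\<bar> \<le> R0"
      proof -
        have "\<bar>m - T N x\<bar> \<le> 1" using m(2) NE1 by (simp add: algebra_simps)
        moreover have "\<bar>T N x\<bar> \<le> G * Stm" using TB[OF _ x] by auto
        ultimately show ?thesis unfolding R0_def by linarith
      qed
      have wsum: "(\<Sum>k=1..p. w k * H L k) = 1 / (h * d0) * H L au"
        unfolding w_def using au_in by (intro sum_if_single) auto
      have out: "HDANN1 \<sigma> B p L q c W bb w b x = czero + \<iota> m"
        unfolding HDANN1_def using wsum m(1)
        by (simp add: H_def[symmetric] L_def b_def \<iota>_def diff_divide_distrib)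
      have rid: "ridge \<sigma> ys x = T N x"
        by (simp add: ridge_sum T_def tm_def \<gamma>_def \<beta>_def \<theta>_def N_def)
      have "\<bar>(czero + ridge \<sigma> ys x) - HDANN1 \<sigma> B p L q c W bb w b x\<bar> = \<bar>T N x - \<iota> m\<bar>"
        by (simp add: out rid)
      also have "\<dots> \<le> real (Suc N) * E1 + \<eta>" using m(2) iota'[OF mR] by linarith
      also have "\<dots> \<le> (real N + 2) * E1" using E1\<eta> by (simp add: algebra_simps)
      also have "\<dots> \<le> tol" by (rule E1b(1))
      finally show "\<bar>(czero + ridge \<sigma> ys x) - HDANN1 \<sigma> B p L q c W bb w b x\<bar> \<le> tol" .
    qed
  qed
qed


theorem theorem2:
  fixes p :: nat
    and B :: "'d::finite \<Rightarrow> nat \<Rightarrow> nat \<Rightarrow> real \<Rightarrow> real"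
    and \<sigma> :: "real \<Rightarrow> real"
    and f :: "real^'d \<Rightarrow> real"
    and \<epsilon> :: real
  assumes width: "p \<ge> CARD('d) + 3"
    and basis: "\<And>j k. k \<in> {1..p} \<Longrightarrow> basis_functions (B j k)"
    and nonaffine: "\<not> affine_fun \<sigma>"
    and lip: "lipschitz_fun \<sigma>"
    and C1: "C1_at_point_nonzero_deriv \<sigma>"
    and fcont: "continuous_on unit_cube f"
    and eps: "\<epsilon> > 0"
  shows "\<exists>L\<ge>1. \<exists>q :: 'd \<Rightarrow> nat \<Rightarrow> nat. (\<forall>j. \<forall>k\<in>{1..p}. q j k \<ge> 1) \<and>
           (\<exists>c W bb w b. \<exists>\<delta><\<epsilon>. \<forall>x\<in>unit_cube.
              \<bar>f x - HDANN1 \<sigma> B p L q c W bb w b x\<bar> \<le> \<delta>)"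
proof -
  obtain C where C: "\<And>x y. \<bar>\<sigma> x - \<sigma> y\<bar> \<le> C * \<bar>x - y\<bar>" using lip unfolding lipschitz_fun_def by blast
  have Ca: "\<bar>\<sigma> x - \<sigma> y\<bar> \<le> \<bar>C\<bar> * \<bar>x - y\<bar>" for x y
    using C[of x y] by (smt (verit) abs_ge_self abs_ge_zero mult_right_mono)
  have cont: "continuous_on UNIV \<sigma>"
  proof (rule lipschitz_on_continuous_on)
    show "\<bar>C\<bar>-lipschitz_on UNIV \<sigma>" by (rule lipschitz_onI) (auto simp: dist_real_def Ca)
  qed
  obtain x0 U where U: "open U" "x0 \<in> U" "\<forall>x\<in>U. \<sigma> differentiable (at x)" "deriv \<sigma> x0 \<noteq> 0"
    using C1 unfolding C1_at_point_nonzero_deriv_def by blast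
  have der: "(\<sigma> has_real_derivative deriv \<sigma> x0) (at x0)"
    using U DERIV_deriv_iff_real_differentiable by blast
  obtain c0 ys where cy: "\<forall>x\<in>unit_cube. \<bar>f x - (c0 + ridge \<sigma> ys x)\<bar> \<le> \<epsilon>/2"
    using approx_ridge[OF cont Ca nonaffine fcont, of "\<epsilon>/2"] eps by auto
  obtain L q c W bb w b where Lq: "L \<ge> 1" "\<forall>j. \<forall>k\<in>{1..p}. q j k \<ge> 1"
    and net: "\<forall>x\<in>unit_cube. \<bar>(c0 + ridge \<sigma> ys x) - HDANN1 \<sigma> B p L q c W bb w b x\<bar> \<le> \<epsilon>/4"
    using network[where tol="\<epsilon>/4" and czero=c0 and ys=ys and B=B and p=p and \<sigma>=\<sigma>, OF width basis Ca abs_ge_zero der U(4)] eps by auto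
  show ?thesis
  proof (intro exI conjI)
    show "L \<ge> 1" by (rule Lq(1))
    show "\<forall>j. \<forall>k\<in>{1..p}. q j k \<ge> 1" by (rule Lq(2))
    show "3*\<epsilon>/4 < \<epsilon>" using eps by simp
    show "\<forall>x\<in>unit_cube. \<bar>f x - HDANN1 \<sigma> B p L q c W bb w b x\<bar> \<le> 3*\<epsilon>/4"
    proof
      fix x :: "real^'d" assume x: "x \<in> unit_cube"
      have "\<bar>f x - (c0 + ridge \<sigma> ys x)\<bar> \<le> \<epsilon>/2" "\<bar>(c0 + ridge \<sigma> ys x) - HDANN1 \<sigma> B p L q c W bb w b x\<bar> \<le> \<epsilon>/4"
        using cy net x by auto
      then show "\<bar>f x - HDANN1 \<sigma> B p L q c W bb w b x\<bar> \<le> 3*\<epsilon>/4" by linarith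
    qed
  qed
qed

end
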